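(* Let $h=0$, $\rho>0$ and $\varepsilon,\varepsilon'\in(-\frac{\rho J}2,0]$. If $\varepsilon\ne0$, \[ w_2(\mu_{\mathrm{MC}}^{\varepsilon,\rho;N},\mu_{\mathrm{MC}}^{\varepsilon',\rho;N};N)\le\frac2J\frac{1}{\sqrt{-\frac{2\varepsilon}J}\sqrt{1-\left(-\frac{2\varepsilon}{J\rho}\right)}}|\varepsilon-\varepsilon'|, \] and for $\varepsilon=0$, \[ w_2(\mu_{\mathrm{MC}}^{0,\rho;N},\mu_{\mathrm{MC}}^{\varepsilon',\rho;N};N)\le\frac2{\sqrt J}|\varepsilon'|^{1/2}. \]
   Context: Mean-field spherical model with $h=0$: $\phi\in\mathbb{R}^N$ ($N$ lattice sites), $J>0$, $H[\phi]=-\frac J{2N}(\sum_x\phi_x)^2$. For $\rho>0$, $|m|<\sqrt\rho$, $\mu_{\mathrm{MC}}^{m,\rho;N}$ is the normalized uniform surface measure on $\{\sum_x\phi_x=mN,\ \sum_x\phi_x^2=\rho N\}$. For $\varepsilon\in(-\frac{\rho J}2,0)$ the microcanonical ensemble is $\mu_{\mathrm{MC}}^{\varepsilon,\rho;N}=\frac12\mu_{\mathrm{MC}}^{m_+,\rho;N}+\frac12\mu_{\mathrm{MC}}^{m_-,\rho;N}$ with $m_\pm=\pm\sqrt{-2\varepsilon/J}$, and $\mu_{\mathrm{MC}}^{0,\rho;N}=\mu_{\mathrm{MC}}^{m,\rho;N}|_{m=0}$. $w_2(\mu_1,\mu_2;N)=\left(\inf_\gamma\int\gamma(dx,dy)\frac1N\sum_i|x_i-y_i|^2\right)^{1/2}$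 over couplings of $\mu_1,\mu_2$. *)

theory Defs
  imports "HOL-Probability.Probability"
begin

text \<open>Configurations \<phi> in R^N are vectors of type real^'n, N = CARD('n).
  The borel sigma-algebra on real^'n is the one of the Euclidean topology.\<close>

definition onevec :: "real ^ 'n" where
  "onevec = (\<chi> i. 1)"

definition mc_surface :: "real \<Rightarrow> real \<Rightarrow> (real ^ 'n) set" where
  "mc_surface m \<rho> = {\<phi>. (\<Sum>i\<in>UNIV. \<phi> $ i) = m * real CARD('n)
                        \<and> (\<Sum>i\<in>UNIV. (\<phi> $ i)^2) = \<rho> * real CARD('n)}"

text \<open>The normalized uniform surface measure on the surface: it is the (N-2)-sphere
  centred at m*1 inside the hyperplane orthogonal to 1, and its normalized uniform
  measure is the probability measure carried by the surface that is invariant under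
  all orthogonal transformations fixing the vector 1 (the symmetry group of this sphere).\<close>
definition mc_fixed :: "real \<Rightarrow> real \<Rightarrow> (real ^ 'n) measure" where
  "mc_fixed m \<rho> = (THE \<mu>. prob_space \<mu> \<and> sets \<mu> = sets borel
       \<and> emeasure \<mu> (mc_surface m \<rho>) = 1
       \<and> (\<forall>Q. orthogonal_transformation Q \<and> Q onevec = onevec \<longrightarrow> distr \<mu> borel Q = \<mu>))"

definition half_mix :: "'a measure \<Rightarrow> 'a measure \<Rightarrow> 'a measure" where
  "half_mix \<mu> \<nu> = measure_of (space \<mu>) (sets \<mu>)
      (\<lambda>A. (1/2) * emeasure \<mu> A + (1/2) * emeasure \<nu> A)"

definition mc_energy :: "real \<Rightarrow> real \<Rightarrow> real \<Rightarrow> (real ^ 'n) measure" where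
  "mc_energy J \<epsilon> \<rho> = (if \<epsilon> = 0 then mc_fixed 0 \<rho>
      else half_mix (mc_fixed (sqrt (-2*\<epsilon>/J)) \<rho>) (mc_fixed (- sqrt (-2*\<epsilon>/J)) \<rho>))"

definition couplings :: "(real ^ 'n) measure \<Rightarrow> (real ^ 'n) measure \<Rightarrow> ((real ^ 'n) \<times> (real ^ 'n)) measure set" where
  "couplings \<mu> \<nu> = {\<gamma>. prob_space \<gamma> \<and> sets \<gamma> = sets borel
       \<and> distr \<gamma> borel fst = \<mu> \<and> distr \<gamma> borel snd = \<nu>}"

definition w2 :: "(real ^ 'n) measure \<Rightarrow> (real ^ 'n) measure \<Rightarrow> real" where
  "w2 \<mu> \<nu> = sqrt (enn2real (INF \<gamma>\<in>couplings \<mu> \<nu>.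
       \<integral>\<^sup>+ p. ennreal ((1 / real CARD('n)) * (\<Sum>i\<in>UNIV. \<bar>fst p $ i - snd p $ i\<bar>^2)) \<partial>\<gamma>))"

end

theory Submission
  imports Defs "HOL-Analysis.Change_Of_Vars"
begin


lemma inner_onevec: "x \<bullet> (onevec::real^'n) = (\<Sum>i\<in>UNIV. x $ i)"
  by (simp add: onevec_def inner_vec_def)

lemma onevec_inner_self: "onevec \<bullet> (onevec::real^'n) = real CARD('n)"
  by (simp add: inner_vec_def onevec_def)

lemma sum_sq_inner: "(\<Sum>i\<in>UNIV. (x $ i)^2) = x \<bullet> (x::real^'n)"
  by (simp add: inner_vec_def power2_eq_square)

lemma mc_surface_alt: "mc_surface m \<rho> = {x::real^'n. x \<bullet> onevec = m * real CARD('n) \<and> x \<bullet> x = \<rho> * real CARD('n)}"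
  by (simp add: mc_surface_def inner_onevec sum_sq_inner)

definition mcP :: "real \<Rightarrow> real \<Rightarrow> (real^'n) measure \<Rightarrow> bool" where
  "mcP m \<rho> \<mu> \<longleftrightarrow> prob_space \<mu> \<and> sets \<mu> = sets borel
       \<and> emeasure \<mu> (mc_surface m \<rho>) = 1
       \<and> (\<forall>Q. orthogonal_transformation Q \<and> Q onevec = onevec \<longrightarrow> distr \<mu> borel Q = \<mu>)"

lemma mc_fixed_eq: "mc_fixed m \<rho> = (THE \<mu>. mcP m \<rho> \<mu>)"
  by (simp add: mc_fixed_def mcP_def)

lemma orth_meas: "orthogonal_transformation (Q::real^'n\<Rightarrow>real^'n) \<Longrightarrow> Q \<in> borel_measurable borel"
proof -
  assume "orthogonal_transformation Q"
  then have "linear Q" by (rule orthogonal_transformation_linear)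
  then have "bounded_linear Q" by (simp add: linear_conv_bounded_linear)
  then have "continuous_on UNIV Q" by (rule linear_continuous_on)
  then show ?thesis by (rule borel_measurable_continuous_onI)
qed

definition tmap :: "real \<Rightarrow> real \<Rightarrow> real \<Rightarrow> real^'n \<Rightarrow> real^'n" where
  "tmap \<rho> m m' x = m' *\<^sub>R onevec + sqrt ((\<rho> - m'^2)/(\<rho> - m^2)) *\<^sub>R (x - m *\<^sub>R onevec)"

lemma tmap_meas: "tmap \<rho> m m' \<in> borel_measurable borel"
  unfolding tmap_def by measurable

lemma tmap_surface:
  assumes "m^2 < \<rho>" "m'^2 < \<rho>" "x \<in> mc_surface m \<rho>"
  shows "tmap \<rho> m m' (x::real^'n) \<in> mc_surface m' \<rho>"
proof -
  let ?N = "real CARD('n)"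
  define v where "v = x - m *\<^sub>R onevec"
  define k where "k = sqrt ((\<rho> - m'^2)/(\<rho> - m^2))"
  have x1: "x \<bullet> onevec = m * ?N" and xx: "x \<bullet> x = \<rho> * ?N" using assms(3) by (auto simp: mc_surface_alt)
  have v1: "v \<bullet> onevec = 0" using x1 by (simp add: v_def inner_diff_left onevec_inner_self)
  have v1': "onevec \<bullet> v = 0" using v1 by (simp add: inner_commute)
  have vv: "v \<bullet> v = (\<rho> - m^2) * ?N" using x1 xx
    by (simp add: v_def inner_diff_left inner_diff_right onevec_inner_self inner_commute power2_eq_square algebra_simps)
  have kk: "k * k = (\<rho> - m'^2)/(\<rho> - m^2)" unfolding k_def using assms
    by (simp add: divide_nonneg_pos)
  have t: "tmap \<rho> m m' x = m' *\<^sub>R onevec + k *\<^sub>R v" by (simp add: tmap_def k_def v_def)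
  have "(m' *\<^sub>R onevec + k *\<^sub>R v) \<bullet> onevec = m' * ?N"
    using v1 by (simp add: inner_add_left onevec_inner_self)
  moreover have "(m' *\<^sub>R onevec + k *\<^sub>R v) \<bullet> (m' *\<^sub>R onevec + k *\<^sub>R v) = \<rho> * ?N"
  proof -
    have "(m' *\<^sub>R onevec + k *\<^sub>R v) \<bullet> (m' *\<^sub>R onevec + k *\<^sub>R v) = m'^2 * ?N + (k*k) * (v \<bullet> v)"
      by (simp add: inner_add_left inner_add_right v1 v1' onevec_inner_self power2_eq_square algebra_simps)
    also have "(k*k) * (v \<bullet> v) = (\<rho> - m'^2) * ?N" using assms by (simp add: kk vv)
    also have "m'^2 * ?N + (\<rho> - m'^2) * ?N = \<rho> * ?N" by (simp add: algebra_simps)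
    finally show ?thesis .
  qed
  ultimately show ?thesis by (simp add: t mc_surface_alt)
qed

lemma tmap_comm:
  assumes "linear Q" "Q onevec = onevec"
  shows "Q (tmap \<rho> m m' x) = tmap \<rho> m m' (Q x)"
  using assms by (simp add: tmap_def linear_add linear_scale linear_diff)

lemma tmap_inv:
  assumes "m^2 < \<rho>" "m'^2 < \<rho>"
  shows "tmap \<rho> m' m (tmap \<rho> m m' x) = x"
proof -
  have "sqrt ((\<rho> - m\<^sup>2) / (\<rho> - m'\<^sup>2)) * sqrt ((\<rho> - m'\<^sup>2) / (\<rho> - m\<^sup>2)) = 1"
    using assms by (simp add: real_sqrt_mult[symmetric])
  then show ?thesis by (simp add: tmap_def algebra_simps)
qed

lemma mcP_transfer:
  assumes "m^2 < \<rho>" "m'^2 < \<rho>" "mcP m \<rho> (\<mu>::(real^'n) measure)"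
  shows "mcP m' \<rho> (distr \<mu> borel (tmap \<rho> m m'))"
proof -
  have P: "prob_space \<mu>" and S: "sets \<mu> = sets borel" and E: "emeasure \<mu> (mc_surface m \<rho>) = 1"
    and I: "\<And>Q. orthogonal_transformation Q \<Longrightarrow> Q onevec = onevec \<Longrightarrow> distr \<mu> borel Q = \<mu>"
    using assms(3) by (auto simp: mcP_def)
  have sp: "space \<mu> = UNIV" using S sets_eq_imp_space_eq by fastforce
  have meas: "tmap \<rho> m m' \<in> \<mu> \<rightarrow>\<^sub>M borel" using tmap_meas measurable_cong_sets[OF S refl] by blast
  have clsd: "closed (mc_surface m' \<rho> :: (real^'n) set)"
    unfolding mc_surface_alt by (intro closed_Collect_conj closed_Collect_eq continuous_intros)
  have clsd0: "closed (mc_surface m \<rho> :: (real^'n) set)"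
    unfolding mc_surface_alt by (intro closed_Collect_conj closed_Collect_eq continuous_intros)
  have "prob_space (distr \<mu> borel (tmap \<rho> m m'))"
    using P meas by (simp add: prob_space.prob_space_distr)
  moreover have "emeasure (distr \<mu> borel (tmap \<rho> m m')) (mc_surface m' \<rho>) = 1"
  proof -
    interpret prob_space \<mu> by fact
    have "emeasure (distr \<mu> borel (tmap \<rho> m m')) (mc_surface m' \<rho>)
        = emeasure \<mu> (tmap \<rho> m m' -` mc_surface m' \<rho>)"
      using meas clsd by (simp add: emeasure_distr sp borel_closed)
    moreover have "emeasure \<mu> (mc_surface m \<rho>) \<le> emeasure \<mu> (tmap \<rho> m m' -` mc_surface m' \<rho>)"
      apply (rule emeasure_mono)
      using tmap_surface[OF assms(1,2)] apply blast
      using meas clsd by (simp add: S measurable_sets_borel[OF tmap_meas] borel_closed)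
    moreover have "emeasure \<mu> (tmap \<rho> m m' -` mc_surface m' \<rho>) \<le> 1"
      by (simp add: emeasure_le_1)
    ultimately show ?thesis using E by simp
  qed
  moreover have "distr (distr \<mu> borel (tmap \<rho> m m')) borel Q = distr \<mu> borel (tmap \<rho> m m')"
    if Q: "orthogonal_transformation Q" "Q onevec = onevec" for Q
  proof -
    have Qm: "Q \<in> borel_measurable borel" by (rule orth_meas[OF Q(1)])
    have Qm': "Q \<in> \<mu> \<rightarrow>\<^sub>M borel" using Qm measurable_cong_sets[OF S refl] by blast
    have "distr (distr \<mu> borel (tmap \<rho> m m')) borel Q = distr \<mu> borel (Q \<circ> tmap \<rho> m m')"
      using distr_distr[OF Qm meas] by simp
    also have "Q \<circ> tmap \<rho> m m' = tmap \<rho> m m' \<circ> Q"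
      using tmap_comm[OF orthogonal_transformation_linear[OF Q(1)] Q(2)] by auto
    also have "distr \<mu> borel (tmap \<rho> m m' \<circ> Q) = distr (distr \<mu> borel Q) borel (tmap \<rho> m m')"
      using distr_distr[OF tmap_meas Qm'] by simp
    also have "\<dots> = distr \<mu> borel (tmap \<rho> m m')" using I[OF Q] by simp
    finally show ?thesis .
  qed
  ultimately show ?thesis by (simp add: mcP_def)
qed


abbreviation S0 :: "real \<Rightarrow> (real^'n) set" where "S0 \<rho> \<equiv> mc_surface 0 \<rho>"

lemma S0_alt: "S0 \<rho> = {x::real^'n. x \<bullet> onevec = 0 \<and> x \<bullet> x = \<rho> * real CARD('n)}"
  by (simp add: mc_surface_alt)

lemma closed_surface: "closed (mc_surface m \<rho> :: (real^'n) set)"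
  unfolding mc_surface_alt by (intro closed_Collect_conj closed_Collect_eq continuous_intros)

lemma surface_borel: "mc_surface m \<rho> \<in> sets (borel :: (real^'n) measure)"
  by (simp add: borel_closed closed_surface)

lemma norm_S0: "x \<in> S0 \<rho> \<Longrightarrow> norm (x::real^'n) = sqrt (\<rho> * real CARD('n))"
  by (simp add: S0_alt norm_eq_sqrt_inner)

lemma compact_S0: "compact (S0 \<rho> :: (real^'n) set)"
proof -
  have "\<forall>x\<in>S0 \<rho>. norm (x::real^'n) \<le> sqrt (\<rho> * real CARD('n))" by (auto simp: norm_S0)
  then have "bounded (S0 \<rho> :: (real^'n) set)" unfolding bounded_iff by blast
  then show ?thesis using closed_surface compact_eq_bounded_closed by blast
qed

lemma householder:
  fixes w w' :: "real^'n"
  assumes "w \<bullet> onevec = 0" "w' \<bullet> onevec = 0" "norm w = norm w'"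
  shows "\<exists>Q. orthogonal_transformation Q \<and> Q onevec = onevec \<and> Q w = w'"
proof (cases "w = w'")
  case True
  then show ?thesis by (intro exI[of _ "\<lambda>x. x"]) (simp add: orthogonal_transformation_def linear_id[unfolded id_def])
next
  case False
  define u where "u = w - w'"
  have uu: "u \<bullet> u \<noteq> 0" using False by (simp add: u_def)
  have u1: "onevec \<bullet> u = 0" using assms by (simp add: u_def inner_diff_right inner_commute)
  have ww: "w \<bullet> w = w' \<bullet> w'" using assms(3) by (simp add: norm_eq_sqrt_inner)
  define Q where "Q x = x - (2 * (x \<bullet> u) / (u \<bullet> u)) *\<^sub>R u" for x
  have lin: "linear Q" unfolding Q_def
    by (intro linearI) (auto simp: inner_add_left algebra_simps add_divide_distrib)
  have "Q v \<bullet> Q z = v \<bullet> z" for v z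
    using uu unfolding Q_def
    by (simp add: inner_diff_left inner_diff_right inner_commute field_simps power2_eq_square)
  then have "orthogonal_transformation Q" using lin by (simp add: orthogonal_transformation_def)
  moreover have "Q onevec = onevec" using u1 by (simp add: Q_def)
  moreover have "Q w = w'"
  proof -
    have h: "2 * (w \<bullet> u) = u \<bullet> u" using ww
      by (simp add: u_def inner_diff_left inner_diff_right inner_commute)
    have e1: "2 * (w \<bullet> u) / (u \<bullet> u) = 1" by (metis h uu divide_self)
    have "Q w = w - u" unfolding Q_def by (simp only: e1 scaleR_one)
    then show ?thesis by (simp add: u_def)
  qed
  ultimately show ?thesis by blast
qed

lemma orth_S0:
  fixes Q :: "real^'n \<Rightarrow> real^'n"
  assumes "orthogonal_transformation Q" "Q onevec = onevec"
  shows "Q x \<in> S0 \<rho> \<longleftrightarrow> (x::real^'n) \<in> S0 \<rho>"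
proof -
  have "Q x \<bullet> onevec = x \<bullet> onevec" "Q x \<bullet> Q x = x \<bullet> x"
    using assms orthogonal_transformation_def[of Q] by metis+
  then show ?thesis by (simp add: S0_alt)
qed

lemma integrable_S0:
  fixes f :: "real^'n \<Rightarrow> real"
  assumes "prob_space \<mu>" "sets \<mu> = sets borel" "continuous_on UNIV f"
  shows "integrable \<mu> (\<lambda>x. indicator (S0 \<rho>) x * f x)"
proof -
  interpret prob_space \<mu> by fact
  have "compact (f ` S0 \<rho>)"
    by (rule compact_continuous_image[OF continuous_on_subset[OF assms(3)] compact_S0]) simp
  then obtain B where B: "\<forall>x\<in>S0 \<rho>. \<bar>f x\<bar> \<le> B" 
    using compact_imp_bounded[of "f ` S0 \<rho>"] by (auto simp: bounded_iff)
  have "AE x in \<mu>. norm (indicator (S0 \<rho>) x * f x) \<le> max B 0"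
    using B by (intro AE_I2) (auto simp: indicator_def)
  moreover have "(\<lambda>x. indicator (S0 \<rho>) x * f x) \<in> borel_measurable \<mu>"
    unfolding measurable_cong_sets[OF assms(2) refl]
    using borel_measurable_continuous_onI[OF assms(3)] surface_borel by measurable
  ultimately show ?thesis by (rule integrable_const_bound)
qed

definition Fm :: "real \<Rightarrow> (real^'n) measure \<Rightarrow> real^'n \<Rightarrow> real" where
  "Fm \<rho> \<mu> t = (\<integral>x. indicator (S0 \<rho>) x * exp (x \<bullet> t) \<partial>\<mu>)"

lemma cont_exp_inner: "continuous_on UNIV (\<lambda>x::real^'n. exp (x \<bullet> t))"
  by (intro continuous_intros)

lemma Fm_orth:
  fixes Q :: "real^'n \<Rightarrow> real^'n"
  assumes "mcP 0 \<rho> \<mu>" "orthogonal_transformation Q" "Q onevec = onevec"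
  shows "Fm \<rho> \<mu> (Q t) = Fm \<rho> \<mu> (t::real^'n)"
proof -
  have S: "sets \<mu> = sets borel" and I: "distr \<mu> borel Q = \<mu>" using assms by (auto simp: mcP_def)
  have Qm: "Q \<in> \<mu> \<rightarrow>\<^sub>M borel" using orth_meas[OF assms(2)] measurable_cong_sets[OF S refl] by blast
  have hm: "(\<lambda>x. indicator (S0 \<rho>) x * exp (x \<bullet> Q t)) \<in> borel_measurable borel"
    using surface_borel by measurable
  have "Fm \<rho> \<mu> (Q t) = (\<integral>x. indicator (S0 \<rho>) x * exp (x \<bullet> Q t) \<partial>(distr \<mu> borel Q))"
    by (simp add: Fm_def I)
  also have "\<dots> = (\<integral>x. indicator (S0 \<rho>) (Q x) * exp (Q x \<bullet> Q t) \<partial>\<mu>)"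
    by (rule integral_distr[OF Qm hm])
  also have "\<dots> = Fm \<rho> \<mu> t"
    unfolding Fm_def
    using orth_S0[OF assms(2,3)] assms(2) orthogonal_transformation_def[of Q]
    by (simp add: indicator_def)
  finally show ?thesis .
qed

definition hproj :: "real^'n \<Rightarrow> real^'n" where
  "hproj t = t - ((t \<bullet> onevec) / real CARD('n)) *\<^sub>R onevec"

lemma hproj_perp: "hproj t \<bullet> onevec = 0"
  by (simp add: hproj_def inner_diff_left onevec_inner_self)

lemma Fm_hproj: "Fm \<rho> \<mu> (hproj t) = Fm \<rho> \<mu> (t::real^'n)"
proof -
  have "indicator (S0 \<rho>) x * exp (x \<bullet> hproj t) = indicator (S0 \<rho>) x * exp (x \<bullet> t)" for x
    by (cases "x \<in> S0 \<rho>") (auto simp: S0_alt hproj_def inner_diff_right inner_commute[of onevec])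
  then show ?thesis unfolding Fm_def by (intro Bochner_Integration.integral_cong) auto
qed

lemma Fm_norm:
  assumes "mcP 0 \<rho> \<mu>" "w \<bullet> onevec = 0" "w' \<bullet> onevec = 0" "norm w = norm w'"
  shows "Fm \<rho> \<mu> w = Fm \<rho> \<mu> (w'::real^'n)"
  using householder[OF assms(2-4)] Fm_orth[OF assms(1)] by metis


lemma Fm_eq_pt:
  assumes m1: "mcP 0 \<rho> \<mu>1" and m2: "mcP 0 \<rho> \<mu>2" and y0: "y0 \<in> S0 \<rho>"
  shows "Fm \<rho> \<mu>1 (s *\<^sub>R y0) = Fm \<rho> \<mu>2 (s *\<^sub>R (y0::real^'n))"
proof -
  have P1: "prob_space \<mu>1" and S1: "sets \<mu>1 = sets borel" and E1: "emeasure \<mu>1 (S0 \<rho>) = 1"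
    using m1 by (auto simp: mcP_def)
  have P2: "prob_space \<mu>2" and S2: "sets \<mu>2 = sets borel" and E2: "emeasure \<mu>2 (S0 \<rho>) = 1"
    using m2 by (auto simp: mcP_def)
  interpret p1: prob_space \<mu>1 by fact
  interpret p2: prob_space \<mu>2 by fact
  interpret pp: pair_prob_space \<mu>1 \<mu>2 by unfold_locales
  have sp1: "space \<mu>1 = UNIV" using S1 sets_eq_imp_space_eq by fastforce
  have sp2: "space \<mu>2 = UNIV" using S2 sets_eq_imp_space_eq by fastforce
  have M1: "measure \<mu>1 (S0 \<rho>) = 1" using E1 p1.emeasure_eq_measure by simp
  have M2: "measure \<mu>2 (S0 \<rho>) = 1" using E2 p2.emeasure_eq_measure by simp
  have y01: "y0 \<bullet> onevec = 0" using y0 by (simp add: S0_alt)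
  have key1: "Fm \<rho> \<mu> (s *\<^sub>R y) = Fm \<rho> \<mu> (s *\<^sub>R y0)" if "y \<in> S0 \<rho>" "mcP 0 \<rho> \<mu>" for y \<mu>
  proof (rule Fm_norm[OF that(2)])
    show "(s *\<^sub>R y) \<bullet> onevec = 0" using that(1) by (simp add: S0_alt)
    show "(s *\<^sub>R y0) \<bullet> onevec = 0" using y01 by simp
    show "norm (s *\<^sub>R y) = norm (s *\<^sub>R y0)" using that(1) y0 by (simp add: norm_S0)
  qed
  define g where "g x y = indicator (S0 \<rho>) x * indicator (S0 \<rho>) y * exp (x \<bullet> (s *\<^sub>R y))" for x y :: "real^'n"
  have inner1: "(\<integral>x. g x y \<partial>\<mu>1) = indicator (S0 \<rho>) y * Fm \<rho> \<mu>1 (s *\<^sub>R y0)" for y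
  proof (cases "y \<in> S0 \<rho>")
    case True
    then have "(\<integral>x. g x y \<partial>\<mu>1) = Fm \<rho> \<mu>1 (s *\<^sub>R y)" by (simp add: g_def Fm_def)
    then show ?thesis using key1[OF True m1] True by simp
  next
    case False
    then show ?thesis by (simp add: g_def)
  qed
  have inner2: "(\<integral>y. g x y \<partial>\<mu>2) = indicator (S0 \<rho>) x * Fm \<rho> \<mu>2 (s *\<^sub>R y0)" for x
  proof (cases "x \<in> S0 \<rho>")
    case True
    have "g x y = indicator (S0 \<rho>) y * exp (y \<bullet> (s *\<^sub>R x))" for y
      using True by (simp add: g_def inner_commute)
    then have "(\<integral>y. g x y \<partial>\<mu>2) = Fm \<rho> \<mu>2 (s *\<^sub>R x)" by (simp add: Fm_def)
    then show ?thesis using key1[OF True m2] True by simp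
  next
    case False
    then show ?thesis by (simp add: g_def)
  qed
  have rN: "\<rho> * real CARD('n) \<ge> 0" using y0 by (simp add: S0_alt) (metis inner_ge_zero)
  have bnd: "norm (g x y) \<le> exp (\<bar>s\<bar> * (\<rho> * real CARD('n)))" for x y
  proof (cases "x \<in> S0 \<rho> \<and> y \<in> S0 \<rho>")
    case True
    have "x \<bullet> (s *\<^sub>R y) = s * (x \<bullet> y)" by simp
    also have "\<dots> \<le> \<bar>s\<bar> * \<bar>x \<bullet> y\<bar>" by (metis abs_ge_self abs_mult)
    also have "\<dots> \<le> \<bar>s\<bar> * (norm x * norm y)" by (simp add: Cauchy_Schwarz_ineq2 mult_left_mono)
    also have "norm x * norm y = \<rho> * real CARD('n)"
    proof -
      have "norm x = sqrt (\<rho> * real CARD('n))" "norm y = sqrt (\<rho> * real CARD('n))"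
        using True norm_S0 by blast+
      then show ?thesis using rN by (simp add: real_sqrt_mult_self)
    qed
    finally have "x \<bullet> (s *\<^sub>R y) \<le> \<bar>s\<bar> * (\<rho> * real CARD('n))" .
    then show ?thesis using True by (simp add: g_def)
  next
    case False
    then show ?thesis by (auto simp: g_def)
  qed
  have gm: "(\<lambda>(x, y). g x y) \<in> borel_measurable (borel \<Otimes>\<^sub>M borel)"
    unfolding g_def using surface_borel by measurable
  have "integrable (\<mu>1 \<Otimes>\<^sub>M \<mu>2) (\<lambda>(x, y). g x y)"
  proof (rule finite_measure.integrable_const_bound)
    show "finite_measure (\<mu>1 \<Otimes>\<^sub>M \<mu>2)" by (simp add: finite_measure_pair_measure p1.finite_measure_axioms p2.finite_measure_axioms)
    show "AE p in \<mu>1 \<Otimes>\<^sub>M \<mu>2. norm (case p of (x, y) \<Rightarrow> g x y) \<le> exp (\<bar>s\<bar> * (\<rho> * real CARD('n)))"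
      using bnd by (intro AE_I2) (auto split: prod.splits)
    show "(\<lambda>(x, y). g x y) \<in> borel_measurable (\<mu>1 \<Otimes>\<^sub>M \<mu>2)"
      using gm measurable_cong_sets[OF sets_pair_measure_cong[OF S1 S2] refl] by blast
  qed
  then have fub: "(\<integral>y. \<integral>x. g x y \<partial>\<mu>1 \<partial>\<mu>2) = (\<integral>x. \<integral>y. g x y \<partial>\<mu>2 \<partial>\<mu>1)"
    by (rule pp.Fubini_integral)
  have "(\<integral>y. \<integral>x. g x y \<partial>\<mu>1 \<partial>\<mu>2) = Fm \<rho> \<mu>1 (s *\<^sub>R y0)"
    using M2 sp2 by (simp add: inner1 integral_mult_left_zero)
  moreover have "(\<integral>x. \<integral>y. g x y \<partial>\<mu>2 \<partial>\<mu>1) = Fm \<rho> \<mu>2 (s *\<^sub>R y0)"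
    using M1 sp1 by (simp add: inner2 integral_mult_left_zero)
  ultimately show ?thesis using fub by simp
qed

lemma Fm_eq:
  assumes "\<rho> > 0" and m1: "mcP 0 \<rho> \<mu>1" and m2: "mcP 0 \<rho> \<mu>2"
  shows "Fm \<rho> \<mu>1 t = Fm \<rho> \<mu>2 (t::real^'n)"
proof -
  have "S0 \<rho> \<noteq> ({} :: (real^'n) set)" using m1 by (auto simp: mcP_def)
  then obtain y0 :: "real^'n" where y0: "y0 \<in> S0 \<rho>" by blast
  have ny0: "norm y0 > 0" using y0 assms(1) by (simp add: norm_S0)
  define w where "w = hproj t"
  define s where "s = norm w / norm y0"
  have ns: "norm (s *\<^sub>R y0) = norm w" using ny0 by (simp add: s_def)
  have y01: "(s *\<^sub>R y0) \<bullet> onevec = 0" using y0 by (simp add: S0_alt)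
  have "Fm \<rho> \<mu> t = Fm \<rho> \<mu> (s *\<^sub>R y0)" if "mcP 0 \<rho> \<mu>" for \<mu>
  proof -
    have "Fm \<rho> \<mu> t = Fm \<rho> \<mu> w" by (simp add: w_def Fm_hproj)
    also have "\<dots> = Fm \<rho> \<mu> (s *\<^sub>R y0)"
      by (rule Fm_norm[OF that]) (use hproj_perp y01 ns in \<open>auto simp: w_def\<close>)
    finally show ?thesis .
  qed
  then show ?thesis using Fm_eq_pt[OF m1 m2 y0] m1 m2 by simp
qed


definition expspan :: "(real^'n \<Rightarrow> real) set" where
  "expspan = {f. \<exists>I c t. finite (I::nat set) \<and> f = (\<lambda>x. \<Sum>i\<in>I. c i * exp (x \<bullet> t i))}"

lemma expspan_cont: "f \<in> expspan \<Longrightarrow> continuous_on UNIV f"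
  unfolding expspan_def by (auto intro!: continuous_intros)

lemma expspan_add:
  assumes "f \<in> expspan" "g \<in> expspan"
  shows "(\<lambda>x. f x + g x) \<in> expspan"
proof -
  obtain I :: "nat set" and c t where I: "finite I" and f: "f = (\<lambda>x. \<Sum>i\<in>I. c i * exp (x \<bullet> t i))"
    using assms(1) by (auto simp: expspan_def)
  obtain J :: "nat set" and d u where J: "finite J" and g: "g = (\<lambda>x. \<Sum>i\<in>J. d i * exp (x \<bullet> u i))"
    using assms(2) by (auto simp: expspan_def)
  define K where "K = (\<lambda>i. 2*i) ` I \<union> (\<lambda>j. 2*j+1) ` J"
  define e where "e k = (if even k then c (k div 2) else d (k div 2))" for k :: nat
  define v where "v k = (if even k then t (k div 2) else u (k div 2))" for k :: nat
  have "(\<Sum>k\<in>K. e k * exp (x \<bullet> v k)) = f x + g x" for x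
  proof -
    have disj: "(\<lambda>i. 2*i) ` I \<inter> (\<lambda>j. 2*j+1) ` J = {}" by (force dest: arg_cong[where f=even])
    have "(\<Sum>k\<in>K. e k * exp (x \<bullet> v k)) = (\<Sum>k\<in>(\<lambda>i. 2*i) ` I. e k * exp (x \<bullet> v k)) + (\<Sum>k\<in>(\<lambda>j. 2*j+1) ` J. e k * exp (x \<bullet> v k))"
      unfolding K_def using I J disj by (simp add: sum.union_disjoint)
    also have "(\<Sum>k\<in>(\<lambda>i. 2*i) ` I. e k * exp (x \<bullet> v k)) = f x"
      by (subst sum.reindex) (simp_all add: inj_on_def e_def v_def f)
    also have "(\<Sum>k\<in>(\<lambda>j. 2*j+1) ` J. e k * exp (x \<bullet> v k)) = g x"
      by (subst sum.reindex) (simp_all add: inj_on_def e_def v_def g)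
    finally show ?thesis .
  qed
  moreover have "finite K" using I J by (simp add: K_def)
  ultimately show ?thesis unfolding expspan_def by (intro CollectI exI[of _ K] exI[of _ e] exI[of _ v]) auto
qed

lemma expspan_mult:
  assumes "f \<in> expspan" "g \<in> expspan"
  shows "(\<lambda>x. f x * g x) \<in> expspan"
proof -
  obtain I :: "nat set" and c t where I: "finite I" and f: "f = (\<lambda>x. \<Sum>i\<in>I. c i * exp (x \<bullet> t i))"
    using assms(1) by (auto simp: expspan_def)
  obtain J :: "nat set" and d u where J: "finite J" and g: "g = (\<lambda>x. \<Sum>i\<in>J. d i * exp (x \<bullet> u i))"
    using assms(2) by (auto simp: expspan_def)
  define K where "K = prod_encode ` (I \<times> J)"
  define e where "e k = c (fst (prod_decode k)) * d (snd (prod_decode k))" for k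
  define v where "v k = t (fst (prod_decode k)) + u (snd (prod_decode k))" for k
  have "(\<Sum>k\<in>K. e k * exp (x \<bullet> v k)) = f x * g x" for x
  proof -
    have "f x * g x = (\<Sum>i\<in>I. \<Sum>j\<in>J. (c i * exp (x \<bullet> t i)) * (d j * exp (x \<bullet> u j)))"
      by (simp add: f g sum_product)
    also have "\<dots> = (\<Sum>(i,j)\<in>I \<times> J. (c i * exp (x \<bullet> t i)) * (d j * exp (x \<bullet> u j)))"
      by (rule sum.cartesian_product)
    also have "\<dots> = (\<Sum>p\<in>I \<times> J. e (prod_encode p) * exp (x \<bullet> v (prod_encode p)))"
      by (intro sum.cong) (auto simp: e_def v_def inner_add_right exp_add)
    also have "\<dots> = (\<Sum>k\<in>K. e k * exp (x \<bullet> v k))"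
      unfolding K_def by (subst sum.reindex) (auto simp: inj_prod_encode)
    finally show ?thesis by simp
  qed
  moreover have "finite K" using I J by (simp add: K_def)
  ultimately show ?thesis unfolding expspan_def by (intro CollectI exI[of _ K] exI[of _ e] exI[of _ v]) auto
qed

lemma expspan_const: "(\<lambda>_. c) \<in> expspan"
  unfolding expspan_def by (intro CollectI exI[of _ "{0}"] exI[of _ "\<lambda>_. c"] exI[of _ "\<lambda>_. 0"]) auto

lemma expspan_exp: "(\<lambda>x. exp (x \<bullet> t)) \<in> expspan"
  unfolding expspan_def by (intro CollectI exI[of _ "{0}"] exI[of _ "\<lambda>_. 1"] exI[of _ "\<lambda>_. t"]) auto

lemma fro: "function_ring_on (expspan :: (real^'n \<Rightarrow> real) set) (S0 \<rho>)"
proof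
  show "compact (S0 \<rho> :: (real^'n) set)" by (rule compact_S0)
  show "continuous_on (S0 \<rho>) f" if "f \<in> expspan" for f :: "real^'n \<Rightarrow> real"
    using expspan_cont[OF that] continuous_on_subset by blast
  show "(\<lambda>x. f x + g x) \<in> expspan" if "f \<in> expspan" "g \<in> expspan" for f g :: "real^'n \<Rightarrow> real"
    using expspan_add that by blast
  show "(\<lambda>x. f x * g x) \<in> expspan" if "f \<in> expspan" "g \<in> expspan" for f g :: "real^'n \<Rightarrow> real"
    using expspan_mult that by blast
  show "(\<lambda>_. c) \<in> expspan" for c by (rule expspan_const)
  show "\<exists>f\<in>expspan. f x \<noteq> f y" if "x \<in> S0 \<rho>" "y \<in> S0 \<rho>" "x \<noteq> y" for x y :: "real^'n"
  proof -
    have "x \<bullet> (x - y) - y \<bullet> (x - y) = (x - y) \<bullet> (x - y)" by (simp add: inner_diff_left)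
    also have "\<dots> > 0" using that(3) by simp
    finally have "exp (x \<bullet> (x - y)) \<noteq> exp (y \<bullet> (x - y))" by auto
    then show ?thesis by (intro bexI[OF _ expspan_exp[of "x - y"]]) auto
  qed
qed

lemma int_abs_le:
  fixes h :: "'a \<Rightarrow> real"
  assumes "prob_space M" "integrable M h" "\<And>x. \<bar>h x\<bar> \<le> e"
  shows "\<bar>\<integral>x. h x \<partial>M\<bar> \<le> e"
proof -
  interpret prob_space M by fact
  have ic: "integrable M (\<lambda>x. c)" for c :: real by simp
  have "(\<integral>x. h x \<partial>M) \<le> (\<integral>x. e \<partial>M)"
    using assms(3) by (intro Bochner_Integration.integral_mono[OF assms(2) ic]) (auto simp: abs_le_iff)
  moreover have "(\<integral>x. - e \<partial>M) \<le> (\<integral>x. h x \<partial>M)"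
    by (intro Bochner_Integration.integral_mono[OF ic assms(2)]) (smt (verit) assms(3))
  ultimately show ?thesis by (simp add: prob_space)
qed

lemma expspan_int:
  fixes f :: "real^'n \<Rightarrow> real"
  assumes "\<rho> > 0" "mcP 0 \<rho> \<mu>1" "mcP 0 \<rho> \<mu>2" "f \<in> expspan"
  shows "(\<integral>x. indicator (S0 \<rho>) x * f x \<partial>\<mu>1) = (\<integral>x. indicator (S0 \<rho>) x * f x \<partial>\<mu>2)"
proof -
  obtain I :: "nat set" and c t where I: "finite I" and f: "f = (\<lambda>x::real^'n. \<Sum>i\<in>I. c i * exp (x \<bullet> t i))"
    using assms(4) by (auto simp: expspan_def)
  have "(\<integral>x. indicator (S0 \<rho>) x * f x \<partial>\<mu>) = (\<Sum>i\<in>I. c i * Fm \<rho> \<mu> (t i))" if "mcP 0 \<rho> \<mu>" for \<mu>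
  proof -
    have P: "prob_space \<mu>" "sets \<mu> = sets borel" using that by (auto simp: mcP_def)
    have "(\<integral>x. indicator (S0 \<rho>) x * f x \<partial>\<mu>) = (\<integral>x. (\<Sum>i\<in>I. c i * (indicator (S0 \<rho>) x * exp (x \<bullet> t i))) \<partial>\<mu>)"
      by (simp add: f sum_distrib_left mult.left_commute)
    also have "\<dots> = (\<Sum>i\<in>I. (\<integral>x. c i * (indicator (S0 \<rho>) x * exp (x \<bullet> t i)) \<partial>\<mu>))"
      by (intro Bochner_Integration.integral_sum integrable_mult_right integrable_S0[OF P] cont_exp_inner)
    also have "\<dots> = (\<Sum>i\<in>I. c i * Fm \<rho> \<mu> (t i))"
      by (simp add: Fm_def)
    finally show ?thesis .
  qed
  then show ?thesis using assms(2,3) by (simp add: Fm_eq[OF assms(1-3)])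
qed

lemma cont_int_eq:
  fixes g :: "real^'n \<Rightarrow> real"
  assumes "\<rho> > 0" "mcP 0 \<rho> \<mu>1" "mcP 0 \<rho> \<mu>2" "continuous_on UNIV g"
  shows "(\<integral>x. indicator (S0 \<rho>) x * g x \<partial>\<mu>1) = (\<integral>x. indicator (S0 \<rho>) x * g (x::real^'n) \<partial>\<mu>2)"
proof -
  interpret fr: function_ring_on "expspan :: (real^'n \<Rightarrow> real) set" "S0 \<rho>" by (rule fro)
  have P1: "prob_space \<mu>1" "sets \<mu>1 = sets borel" using assms by (auto simp: mcP_def)
  have P2: "prob_space \<mu>2" "sets \<mu>2 = sets borel" using assms by (auto simp: mcP_def)
  let ?D = "\<bar>(\<integral>x. indicator (S0 \<rho>) x * g x \<partial>\<mu>1) - (\<integral>x. indicator (S0 \<rho>) x * g x \<partial>\<mu>2)\<bar>"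
  have D2: "?D \<le> 2 * e" if e: "e > 0" for e
  proof -
    obtain f where f: "f \<in> expspan" and fe: "\<forall>x\<in>S0 \<rho>. \<bar>g x - f x\<bar> < e"
      using fr.Stone_Weierstrass_basic[OF continuous_on_subset[OF assms(4)] e] by auto
    have fc: "continuous_on UNIV f" by (rule expspan_cont[OF f])
    have close: "\<bar>(\<integral>x. indicator (S0 \<rho>) x * g x \<partial>\<mu>) - (\<integral>x. indicator (S0 \<rho>) x * f x \<partial>\<mu>)\<bar> \<le> e"
      if P: "prob_space \<mu>" "sets \<mu> = sets borel" for \<mu>
    proof -
      have ig: "integrable \<mu> (\<lambda>x. indicator (S0 \<rho>) x * g x)" by (rule integrable_S0[OF P assms(4)])
      have if': "integrable \<mu> (\<lambda>x. indicator (S0 \<rho>) x * f x)" by (rule integrable_S0[OF P fc])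
      have "(\<integral>x. indicator (S0 \<rho>) x * g x \<partial>\<mu>) - (\<integral>x. indicator (S0 \<rho>) x * f x \<partial>\<mu>)
          = (\<integral>x. indicator (S0 \<rho>) x * g x - indicator (S0 \<rho>) x * f x \<partial>\<mu>)"
        by (rule Bochner_Integration.integral_diff[OF ig if', symmetric])
      also have "\<bar>\<dots>\<bar> \<le> e"
      proof (rule int_abs_le[OF P(1)])
        show "integrable \<mu> (\<lambda>x. indicator (S0 \<rho>) x * g x - indicator (S0 \<rho>) x * f x)"
          using ig if' by simp
        show "\<bar>indicator (S0 \<rho>) x * g x - indicator (S0 \<rho>) x * f x\<bar> \<le> e" for x
          using fe e by (cases "x \<in> S0 \<rho>") auto
      qed
      finally show ?thesis .
    qed
    have "(\<integral>x. indicator (S0 \<rho>) x * f x \<partial>\<mu>1) = (\<integral>x. indicator (S0 \<rho>) x * f x \<partial>\<mu>2)"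
      by (rule expspan_int[OF assms(1-3) f])
    moreover have "\<bar>(\<integral>x. indicator (S0 \<rho>) x * g x \<partial>\<mu>1) - (\<integral>x. indicator (S0 \<rho>) x * f x \<partial>\<mu>1)\<bar> \<le> e"
      by (rule close[OF P1])
    moreover have "\<bar>(\<integral>x. indicator (S0 \<rho>) x * g x \<partial>\<mu>2) - (\<integral>x. indicator (S0 \<rho>) x * f x \<partial>\<mu>2)\<bar> \<le> e"
      by (rule close[OF P2])
    ultimately show ?thesis by linarith
  qed
  have "?D \<le> 0 + e" if "e > 0" for e
    using D2[of "e/2"] that by simp
  then have "?D \<le> 0" by (rule field_le_epsilon)
  then show ?thesis by simp
qed


lemma AE_surface:
  assumes "mcP m \<rho> \<mu>" shows "AE x in \<mu>. x \<in> mc_surface m \<rho>"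
proof -
  have P: "prob_space \<mu>" and E: "emeasure \<mu> (mc_surface m \<rho>) = 1" using assms by (auto simp: mcP_def)
  interpret prob_space \<mu> by fact
  have "measure \<mu> (mc_surface m \<rho>) = 1" using E by (simp add: emeasure_eq_measure)
  then show ?thesis by (rule AE_prob_1)
qed

lemma closed_eq:
  fixes C :: "(real^'n) set"
  assumes r: "\<rho> > 0" and m1: "mcP 0 \<rho> \<mu>1" and m2: "mcP 0 \<rho> \<mu>2" and C: "closed C"
  shows "emeasure \<mu>1 C = emeasure \<mu>2 C"
proof (cases "C = {}")
  case False
  define gn where "gn n x = max 0 (1 - real n * infdist x C)" for n :: nat and x :: "real^'n"
  have gc: "continuous_on UNIV (gn n)" for n
    unfolding gn_def by (intro continuous_intros continuous_on_infdist continuous_on_id)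
  have gb: "norm (indicator (S0 \<rho>) x * gn n x) \<le> 1" for n x
  proof -
    have "0 \<le> gn n x" "gn n x \<le> 1" unfolding gn_def using infdist_nonneg[of x C] by auto
    then show ?thesis by (auto simp: indicator_def)
  qed
  have lim: "(\<lambda>n. indicator (S0 \<rho>) x * gn n x) \<longlonglongrightarrow> indicator (S0 \<rho> \<inter> C) x" for x
  proof (cases "x \<in> C")
    case True
    then have "gn n x = 1" for n by (simp add: gn_def)
    then show ?thesis using True by (simp add: indicator_def)
  next
    case xC: False
    have "infdist x C \<noteq> 0" using xC False C in_closure_iff_infdist_zero closure_closed by metis
    then have d: "infdist x C > 0" using infdist_nonneg[of x C] by linarith
    define N where "N = nat \<lceil>1 / infdist x C\<rceil>"
    have "indicator (S0 \<rho>) x * gn n x = 0" if "n \<ge> N" for n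
    proof -
      have "real n \<ge> 1 / infdist x C" using that unfolding N_def by linarith
      then have "real n * infdist x C \<ge> 1" using d by (simp add: field_simps)
      then show ?thesis by (simp add: gn_def)
    qed
    then have "eventually (\<lambda>n. indicator (S0 \<rho>) x * gn n x = 0) sequentially"
      by (rule eventually_sequentiallyI)
    then have "(\<lambda>n. indicator (S0 \<rho>) x * gn n x) \<longlonglongrightarrow> 0" by (rule tendsto_eventually)
    then show ?thesis using xC by (simp add: indicator_def)
  qed
  have conv: "(\<lambda>n. \<integral>x. indicator (S0 \<rho>) x * gn n x \<partial>\<mu>) \<longlonglongrightarrow> measure \<mu> (S0 \<rho> \<inter> C)"
    if m: "mcP 0 \<rho> \<mu>" for \<mu>
  proof -
    have P: "prob_space \<mu>" and S: "sets \<mu> = sets borel" using m by (auto simp: mcP_def)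
    interpret prob_space \<mu> by fact
    have sp: "space \<mu> = UNIV" using S sets_eq_imp_space_eq by fastforce
    have "(\<lambda>n. \<integral>x. indicator (S0 \<rho>) x * gn n x \<partial>\<mu>) \<longlonglongrightarrow> (\<integral>x. indicator (S0 \<rho> \<inter> C) x \<partial>\<mu>)"
    proof (rule integral_dominated_convergence[where w="\<lambda>_. 1"])
      show "indicator (S0 \<rho> \<inter> C) \<in> borel_measurable \<mu>"
        unfolding measurable_cong_sets[OF S refl] using surface_borel C
        by (intro borel_measurable_indicator sets.Int) (auto simp: borel_closed)
      show "(\<lambda>x. indicator (S0 \<rho>) x * gn n x) \<in> borel_measurable \<mu>" for n
        unfolding measurable_cong_sets[OF S refl]
        using borel_measurable_continuous_onI[OF gc] surface_borel by measurable
      show "integrable \<mu> (\<lambda>_. 1::real)" by simp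
      show "AE x in \<mu>. (\<lambda>n. indicator (S0 \<rho>) x * gn n x) \<longlonglongrightarrow> indicator (S0 \<rho> \<inter> C) x"
        using lim by simp
      show "AE x in \<mu>. norm (indicator (S0 \<rho>) x * gn n x) \<le> 1" for n
        using gb by simp
    qed
    then show ?thesis by (simp add: sp)
  qed
  have "measure \<mu>1 (S0 \<rho> \<inter> C) = measure \<mu>2 (S0 \<rho> \<inter> C)"
  proof -
    have "(\<lambda>n. \<integral>x. indicator (S0 \<rho>) x * gn n x \<partial>\<mu>1) = (\<lambda>n. \<integral>x. indicator (S0 \<rho>) x * gn n x \<partial>\<mu>2)"
      using cont_int_eq[OF r m1 m2 gc] by simp
    then have "(\<lambda>n. \<integral>x. indicator (S0 \<rho>) x * gn n x \<partial>\<mu>1) \<longlonglongrightarrow> measure \<mu>2 (S0 \<rho> \<inter> C)"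
      using conv[OF m2] by simp
    then show ?thesis using conv[OF m1] LIMSEQ_unique by blast
  qed
  moreover have "emeasure \<mu> C = ennreal (measure \<mu> (S0 \<rho> \<inter> C))" if m: "mcP 0 \<rho> \<mu>" for \<mu>
  proof -
    have P: "prob_space \<mu>" and S: "sets \<mu> = sets borel" using m by (auto simp: mcP_def)
    interpret prob_space \<mu> by fact
    have "emeasure \<mu> C = emeasure \<mu> (S0 \<rho> \<inter> C)"
      using AE_surface[OF m] surface_borel C
      by (intro emeasure_eq_AE) (auto simp: S borel_closed intro!: sets.Int)
    then show ?thesis by (simp add: emeasure_eq_measure)
  qed
  ultimately show ?thesis using m1 m2 by simp
next
  case True
  then show ?thesis by simp
qed

lemma mcP0_unique:
  fixes \<mu>1 :: "(real^'n) measure"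
  assumes r: "\<rho> > 0" and m1: "mcP 0 \<rho> \<mu>1" and m2: "mcP 0 \<rho> \<mu>2"
  shows "\<mu>1 = \<mu>2"
proof -
  have S1: "sets \<mu>1 = sets borel" and S2: "sets \<mu>2 = sets borel" and P1: "prob_space \<mu>1"
    using m1 m2 by (auto simp: mcP_def)
  have sb: "sets (borel :: (real^'n) measure) = sigma_sets UNIV (Collect closed)"
    by (subst borel_eq_closed) (simp add: sets_measure_of)
  show ?thesis
  proof (rule measure_eqI_generator_eq[where E="Collect closed" and \<Omega>=UNIV and A="\<lambda>_. UNIV"])
    show "Int_stable (Collect closed :: (real^'n) set set)" unfolding Int_stable_def by (auto intro: closed_Int)
    show "Collect closed \<subseteq> Pow (UNIV :: (real^'n) set)" by simp
    show "emeasure \<mu>1 X = emeasure \<mu>2 X" if "X \<in> Collect closed" for X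
      using closed_eq[OF r m1 m2] that by simp
    show "sets \<mu>1 = sigma_sets UNIV (Collect closed)" using S1 sb by simp
    show "sets \<mu>2 = sigma_sets UNIV (Collect closed)" using S2 sb by simp
    show "range (\<lambda>_. UNIV) \<subseteq> Collect closed" by simp
    show "(\<Union>i. UNIV) = (UNIV :: (real^'n) set)" by simp
    show "emeasure \<mu>1 UNIV \<noteq> \<infinity>" for i :: nat
    proof -
      have "space \<mu>1 = UNIV" using S1 sets_eq_imp_space_eq by fastforce
      then show ?thesis using prob_space.emeasure_space_1[OF P1] by simp
    qed
  qed
qed


lemma hproj_linear: "linear (hproj :: real^'n \<Rightarrow> real^'n)"
  unfolding hproj_def by (intro linearI) (auto simp: inner_add_left algebra_simps add_divide_distrib)

lemma hproj_comm:
  fixes Q :: "real^'n \<Rightarrow> real^'n"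
  assumes "orthogonal_transformation Q" "Q onevec = onevec"
  shows "Q (hproj x) = hproj (Q x)"
proof -
  have "Q x \<bullet> onevec = x \<bullet> onevec" using assms orthogonal_transformation_def[of Q] by metis
  then show ?thesis using assms orthogonal_transformation_linear[OF assms(1)]
    by (simp add: hproj_def linear_diff linear_scale)
qed

lemma lborel_lebesgue: "Y \<in> sets borel \<Longrightarrow> emeasure lborel Y = emeasure lebesgue Y"
  by (simp add: emeasure_completion main_part)

lemma lborel_orth_bounded:
  fixes Q :: "real^'m::{finite,wellorder} \<Rightarrow> real^'m::_"
  assumes Q: "orthogonal_transformation Q" and X: "X \<in> sets borel" "bounded X"
  shows "emeasure lborel (Q -` X) = emeasure lborel X"
proof -
  have Xl: "X \<in> lmeasurable"
    using X by (intro bounded_set_imp_lmeasurable) (auto intro: sets_completionI_sets)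
  have eq: "Q -` X = inv Q ` X" using orthogonal_transformation_bij[OF Q] bij_vimage_eq_inv_image by blast
  have Xl': "inv Q ` X \<in> lmeasurable" by (rule measurable_orthogonal_image[OF orthogonal_transformation_inv[OF Q] Xl])
  have Qb: "Q -` X \<in> sets borel" using orth_meas[OF Q] X by (simp add: measurable_sets_borel)
  have "emeasure lborel (Q -` X) = emeasure lebesgue (inv Q ` X)" using Qb eq lborel_lebesgue by metis
  also have "\<dots> = ennreal (measure lebesgue (inv Q ` X))" using Xl' by (rule emeasure_eq_measure2)
  also have "\<dots> = ennreal (measure lebesgue X)"
    using measure_orthogonal_image[OF orthogonal_transformation_inv[OF Q] Xl] by simp
  also have "\<dots> = emeasure lebesgue X" using Xl by (rule emeasure_eq_measure2[symmetric])
  also have "\<dots> = emeasure lborel X" using X lborel_lebesgue by metis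
  finally show ?thesis .
qed

lemma exists_perp:
  assumes "CARD('n::finite) \<ge> 2"
  shows "\<exists>y::real^'n. y \<bullet> onevec = 0 \<and> norm y = 3/4"
proof -
  obtain a b :: 'n where ab: "a \<noteq> b"
  proof -
    have "\<not> (\<forall>a b::'n. a = b)"
    proof
      assume "\<forall>a b::'n. a = b"
      then have "(UNIV :: 'n set) \<subseteq> {undefined}" by auto
      then have "CARD('n) \<le> card {undefined::'n}" by (intro card_mono) auto
      then have "CARD('n) \<le> 1" by simp
      then show False using assms by simp
    qed
    then show ?thesis using that by blast
  qed
  define e :: "real^'n" where "e = axis a 1 - axis b 1"
  have e1: "e \<bullet> onevec = 0" by (simp add: e_def inner_diff_left inner_axis' onevec_def)
  have "e \<noteq> 0" using ab by (simp add: e_def axis_eq_axis)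
  then have ne: "norm e > 0" by simp
  define y where "y = ((3/4) / norm e) *\<^sub>R e"
  have "y \<bullet> onevec = 0" using e1 by (simp add: y_def)
  moreover have "norm y = 3/4" using ne by (simp add: y_def)
  ultimately show ?thesis by blast
qed

lemma exists_mcP0_wo:
  assumes N2: "CARD('m::{finite,wellorder}) \<ge> 2" and r: "\<rho> > 0"
  shows "\<exists>\<mu>::(real^'m::_) measure. mcP 0 \<rho> \<mu>"
proof -
  let ?N = "real CARD('m)"
  define c where "c = sqrt (\<rho> * ?N)"
  define D :: "(real^'m::_) set" where "D = {x. norm x < 1 \<and> 1/2 < norm (hproj x)}"
  have hc: "continuous_on UNIV (hproj :: real^'m::_ \<Rightarrow> real^'m::_)"
    using hproj_linear linear_continuous_on linear_conv_bounded_linear by blast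
  have Dopen: "open D" unfolding D_def
    by (intro open_Collect_conj open_Collect_less continuous_intros continuous_on_compose2[OF hc]) auto
  have Db: "D \<in> sets borel" using Dopen by simp
  have Dbd: "bounded D" unfolding D_def bounded_iff by (auto intro: less_imp_le)
  have Dfin: "emeasure lborel D < \<infinity>"
  proof -
    have "D \<subseteq> ball 0 1" by (auto simp: D_def)
    then have "emeasure lborel D \<le> emeasure lborel (ball (0::real^'m::_) 1)" by (intro emeasure_mono) auto
    then show ?thesis using emeasure_lborel_ball_finite[of "0::real^'m::_" 1] by (simp add: top.not_eq_extremum)
  qed
  have Dne: "D \<noteq> {}"
  proof -
    obtain y :: "real^'m::_" where y: "y \<bullet> onevec = 0" "norm y = 3/4" using exists_perp[OF N2] by blast
    have "hproj y = y" using y by (simp add: hproj_def)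
    then have "y \<in> D" using y by (simp add: D_def)
    then show ?thesis by blast
  qed
  have Dpos: "emeasure lborel D \<noteq> 0"
  proof
    assume "emeasure lborel D = 0"
    then have "D \<in> null_sets lborel" using Db by auto
    then have "D \<in> null_sets lebesgue" using Db null_sets_completion_iff[of D lborel] by simp
    then have "negligible D" by (simp add: negligible_iff_null_sets)
    then show False using open_not_negligible[OF Dopen Dne] by simp
  qed
  define lam where "lam = uniform_measure lborel D"
  have Plam: "prob_space lam" unfolding lam_def using Dpos Dfin by (intro prob_space_uniform_measure) auto
  have Slam: "sets lam = sets borel" by (simp add: lam_def)
  have splam: "space lam = UNIV" by (simp add: lam_def)
  have lamD: "emeasure lam D = 1"
    unfolding lam_def using Db Dpos Dfin by (simp add: emeasure_uniform_measure ennreal_divide_self)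
  have QD: "Q x \<in> D \<longleftrightarrow> x \<in> D" if Q: "orthogonal_transformation Q" "Q onevec = onevec" for Q x
  proof -
    have "norm (Q x) = norm x" by (rule orthogonal_transformation_norm[OF Q(1)])
    moreover have "norm (hproj (Q x)) = norm (hproj x)"
      using hproj_comm[OF Q, of x] orthogonal_transformation_norm[OF Q(1)] by metis
    ultimately show ?thesis by (simp add: D_def)
  qed
  have laminv: "distr lam borel Q = lam" if Q: "orthogonal_transformation Q" "Q onevec = onevec" for Q
  proof (rule measure_eqI)
    show "sets (distr lam borel Q) = sets lam" by (simp add: Slam)
    fix A assume "A \<in> sets (distr lam borel Q)"
    then have A: "A \<in> sets borel" by simp
    have Qm: "Q \<in> lam \<rightarrow>\<^sub>M borel" using orth_meas[OF Q(1)] measurable_cong_sets[OF Slam refl] by blast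
    have QA: "Q -` A \<in> sets borel" using orth_meas[OF Q(1)] A by (simp add: measurable_sets_borel)
    have eqs: "D \<inter> Q -` A = Q -` (D \<inter> A)" using QD[OF Q] by auto
    have "emeasure (distr lam borel Q) A = emeasure lam (Q -` A)"
      using Qm A by (simp add: emeasure_distr splam)
    also have "\<dots> = emeasure lborel (D \<inter> Q -` A) / emeasure lborel D"
      unfolding lam_def using Db QA by (simp add: emeasure_uniform_measure)
    also have "emeasure lborel (D \<inter> Q -` A) = emeasure lborel (D \<inter> A)"
      unfolding eqs using Db A Dbd by (intro lborel_orth_bounded[OF Q(1)]) (auto intro: bounded_subset)
    also have "emeasure lborel (D \<inter> A) / emeasure lborel D = emeasure lam A"
      unfolding lam_def using Db A by (simp add: emeasure_uniform_measure)
    finally show "emeasure (distr lam borel Q) A = emeasure lam A" .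
  qed
  define pi :: "real^'m::_ \<Rightarrow> real^'m::_" where "pi x = (c / norm (hproj x)) *\<^sub>R hproj x" for x
  have pim: "pi \<in> borel_measurable borel"
    unfolding pi_def hproj_def by measurable
  have pilam: "pi \<in> lam \<rightarrow>\<^sub>M borel" using pim measurable_cong_sets[OF Slam refl] by blast
  have piS: "pi x \<in> S0 \<rho>" if "x \<in> D" for x
  proof -
    have "1/2 < norm (hproj x)" using that by (simp add: D_def)
    then have np: "norm (hproj x) > 0" by linarith
    have "pi x \<bullet> onevec = 0" by (simp add: pi_def hproj_perp)
    moreover have "pi x \<bullet> pi x = \<rho> * ?N"
    proof -
      have "pi x \<bullet> pi x = (norm (pi x))^2" by (simp add: power2_norm_eq_inner)
      also have "norm (pi x) = c" using np r by (simp add: pi_def c_def)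
      also have "c^2 = \<rho> * ?N" using r by (simp add: c_def)
      finally show ?thesis .
    qed
    ultimately show ?thesis by (simp add: S0_alt)
  qed
  define \<mu> where "\<mu> = distr lam borel pi"
  have "prob_space \<mu>" unfolding \<mu>_def using Plam pilam by (simp add: prob_space.prob_space_distr)
  moreover have "sets \<mu> = sets borel" by (simp add: \<mu>_def)
  moreover have "emeasure \<mu> (S0 \<rho>) = 1"
  proof -
    interpret prob_space lam by fact
    have "emeasure \<mu> (S0 \<rho>) = emeasure lam (pi -` S0 \<rho>)"
      unfolding \<mu>_def by (subst emeasure_distr[OF pilam]) (simp_all add: surface_borel splam)
    moreover have "emeasure lam D \<le> emeasure lam (pi -` S0 \<rho>)"
      using piS measurable_sets_borel[OF pim surface_borel] Db by (intro emeasure_mono) (auto simp: Slam)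
    moreover have "emeasure lam (pi -` S0 \<rho>) \<le> 1" by (rule emeasure_le_1)
    ultimately show ?thesis using lamD by simp
  qed
  moreover have "distr \<mu> borel Q = \<mu>" if Q: "orthogonal_transformation Q" "Q onevec = onevec" for Q
  proof -
    have Qm: "Q \<in> borel_measurable borel" by (rule orth_meas[OF Q(1)])
    have Qm': "Q \<in> lam \<rightarrow>\<^sub>M borel" using Qm measurable_cong_sets[OF Slam refl] by blast
    have comm: "Q \<circ> pi = pi \<circ> Q"
    proof
      fix x
      have "Q (pi x) = (c / norm (hproj x)) *\<^sub>R Q (hproj x)"
        using orthogonal_transformation_linear[OF Q(1)] by (simp add: pi_def linear_scale)
      also have "\<dots> = pi (Q x)"
        using hproj_comm[OF Q, of x] orthogonal_transformation_norm[OF Q(1), of "hproj x"]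
        by (simp add: pi_def)
      finally show "(Q \<circ> pi) x = (pi \<circ> Q) x" by simp
    qed
    have "distr \<mu> borel Q = distr lam borel (Q \<circ> pi)"
      unfolding \<mu>_def using distr_distr[OF Qm pilam] by simp
    also have "\<dots> = distr lam borel (pi \<circ> Q)" by (simp add: comm)
    also have "\<dots> = distr (distr lam borel Q) borel pi"
      using distr_distr[OF pim Qm'] by simp
    also have "\<dots> = \<mu>" using laminv[OF Q] by (simp add: \<mu>_def)
    finally show ?thesis .
  qed
  ultimately show ?thesis unfolding mcP_def by blast
qed


typedef ('a::finite) ocp = "{..<CARD('a)}"
  by (rule exI[of _ 0]) (simp add: finite_UNIV_card_ge_0)

instance ocp :: (finite) finite
proof
  have "(UNIV :: 'a ocp set) = Abs_ocp ` {..<CARD('a)}"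
    by (rule type_definition.Abs_image[OF type_definition_ocp, symmetric])
  then show "finite (UNIV :: 'a ocp set)" by (metis finite_lessThan finite_imageI)
qed

instantiation ocp :: (finite) linorder
begin
definition less_eq_ocp :: "'a ocp \<Rightarrow> 'a ocp \<Rightarrow> bool" where "less_eq_ocp x y \<longleftrightarrow> Rep_ocp x \<le> Rep_ocp y"
definition less_ocp :: "'a ocp \<Rightarrow> 'a ocp \<Rightarrow> bool" where "less_ocp x y \<longleftrightarrow> Rep_ocp x < Rep_ocp y"
instance by standard (auto simp: less_eq_ocp_def less_ocp_def Rep_ocp_inject[symmetric])
end

instance ocp :: (finite) wellorder
proof
  fix P :: "'a ocp \<Rightarrow> bool" and a :: "'a ocp"
  assume step: "\<And>x. (\<And>y. y < x \<Longrightarrow> P y) \<Longrightarrow> P x"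
  have "P x" if "Rep_ocp x = n" for n x
    using that
  proof (induction n arbitrary: x rule: less_induct)
    case (less n)
    show ?case by (rule step) (use less in \<open>auto simp: less_ocp_def\<close>)
  qed
  then show "P a" by blast
qed

lemma card_ocp: "CARD('a::finite ocp) = CARD('a)"
  using type_definition.card[OF type_definition_ocp] by simp

lemma mcP0_transfer_idx:
  fixes g :: "'n::finite \<Rightarrow> 'm::finite"
  assumes g: "bij g" and card: "CARD('n) = CARD('m)" and m: "mcP 0 \<rho> (\<mu>::(real^'m) measure)"
  shows "mcP 0 \<rho> (distr \<mu> borel (\<lambda>x. \<chi> i. x $ g i) :: (real^'n) measure)"
proof -
  define L :: "real^'m \<Rightarrow> real^'n" where "L x = (\<chi> i. x $ g i)" for x
  define Li :: "real^'n \<Rightarrow> real^'m" where "Li y = (\<chi> j. y $ inv g j)" for y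
  have gi: "g (inv g j) = j" for j using surj_f_inv_f[OF bij_is_surj[OF g]] by simp
  have ig: "inv g (g i) = i" for i using inv_f_f[OF bij_is_inj[OF g]] by simp
  have LLi: "L (Li y) = y" for y by (simp add: L_def Li_def ig vec_eq_iff)
  have LiL: "Li (L x) = x" for x by (simp add: L_def Li_def gi vec_eq_iff)
  have Llin: "linear L" unfolding L_def by (intro linearI) (auto simp: vec_eq_iff)
  have Lilin: "linear Li" unfolding Li_def by (intro linearI) (auto simp: vec_eq_iff)
  have Linner: "L x \<bullet> L y = x \<bullet> y" for x y
  proof -
    have "L x \<bullet> L y = (\<Sum>i\<in>UNIV. x $ g i * y $ g i)" by (simp add: L_def inner_vec_def)
    also have "\<dots> = (\<Sum>j\<in>UNIV. x $ j * y $ j)"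
      using sum.reindex_bij_betw[of g UNIV UNIV "\<lambda>j. x $ j * y $ j"] g by (simp add: bij_betw_def bij_def)
    finally show ?thesis by (simp add: inner_vec_def)
  qed
  have Liinner: "Li x \<bullet> Li y = x \<bullet> y" for x y using Linner[of "Li x" "Li y"] by (simp add: LLi)
  have L1: "L onevec = onevec" by (simp add: L_def onevec_def vec_eq_iff)
  have Li1: "Li onevec = onevec" by (simp add: Li_def onevec_def vec_eq_iff)
  have Lm: "L \<in> borel_measurable borel"
    using Llin by (intro borel_measurable_continuous_onI linear_continuous_on) (simp add: linear_conv_bounded_linear)
  have P: "prob_space \<mu>" and S: "sets \<mu> = sets borel" and E: "emeasure \<mu> (S0 \<rho>) = 1"
    and I: "\<And>Q. orthogonal_transformation Q \<Longrightarrow> Q onevec = onevec \<Longrightarrow> distr \<mu> borel Q = \<mu>"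
    using m by (auto simp: mcP_def)
  have sp: "space \<mu> = UNIV" using S sets_eq_imp_space_eq by fastforce
  have Lm': "L \<in> \<mu> \<rightarrow>\<^sub>M borel" using Lm measurable_cong_sets[OF S refl] by blast
  have pre: "L -` S0 \<rho> = S0 \<rho>"
  proof -
    have "L x \<bullet> onevec = x \<bullet> onevec" "L x \<bullet> L x = x \<bullet> x" for x
      using Linner[of x onevec] Linner[of x x] L1 by auto
    then show ?thesis by (auto simp: S0_alt card)
  qed
  have "prob_space (distr \<mu> borel L)" using P Lm' by (simp add: prob_space.prob_space_distr)
  moreover have "emeasure (distr \<mu> borel L) (S0 \<rho>) = 1"
    by (subst emeasure_distr[OF Lm']) (simp_all add: surface_borel sp pre E)
  moreover have "distr (distr \<mu> borel L) borel Q = distr \<mu> borel L"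
    if Q: "orthogonal_transformation Q" "Q onevec = onevec" for Q :: "real^'n \<Rightarrow> real^'n"
  proof -
    define Q' where "Q' = Li \<circ> Q \<circ> L"
    have "linear Q'" unfolding Q'_def
      using Llin Lilin orthogonal_transformation_linear[OF Q(1)] by (intro linear_compose) auto
    moreover have "Q' v \<bullet> Q' w = v \<bullet> w" for v w
      using Q(1) unfolding Q'_def orthogonal_transformation_def by (simp add: Liinner Linner)
    ultimately have Q'o: "orthogonal_transformation Q'" by (simp add: orthogonal_transformation_def)
    have Q'1: "Q' onevec = onevec" by (simp add: Q'_def L1 Q(2) Li1)
    have comm: "Q \<circ> L = L \<circ> Q'" by (rule ext) (simp add: Q'_def LLi)
    have Qm: "Q \<in> borel_measurable borel" by (rule orth_meas[OF Q(1)])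
    have Q'm: "Q' \<in> \<mu> \<rightarrow>\<^sub>M borel" using orth_meas[OF Q'o] measurable_cong_sets[OF S refl] by blast
    have "distr (distr \<mu> borel L) borel Q = distr \<mu> borel (Q \<circ> L)" using distr_distr[OF Qm Lm'] by simp
    also have "\<dots> = distr \<mu> borel (L \<circ> Q')" by (simp add: comm)
    also have "\<dots> = distr (distr \<mu> borel Q') borel L" using distr_distr[OF Lm Q'm] by simp
    also have "\<dots> = distr \<mu> borel L" using I[OF Q'o Q'1] by simp
    finally show ?thesis .
  qed
  ultimately show ?thesis unfolding mcP_def L_def[abs_def] by simp
qed

lemma exists_mcP0:
  assumes "CARD('n::finite) \<ge> 2" "\<rho> > 0"
  shows "\<exists>\<mu>::(real^'n) measure. mcP 0 \<rho> \<mu>"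
proof -
  have c: "CARD('n ocp) = CARD('n)" by (rule card_ocp)
  have "\<exists>\<mu>::(real^'n ocp) measure. mcP 0 \<rho> \<mu>" by (rule exists_mcP0_wo) (use assms c in auto)
  then obtain \<mu> :: "(real^'n ocp) measure" where m: "mcP 0 \<rho> \<mu>" by blast
  obtain g :: "'n \<Rightarrow> 'n ocp" where "bij_betw g UNIV UNIV"
    using finite_same_card_bij[of "UNIV :: 'n set" "UNIV :: 'n ocp set"] c by auto
  then have "bij g" by (simp add: bij_betw_def bij_def)
  then show ?thesis using mcP0_transfer_idx[OF _ c[symmetric] m] by blast
qed

lemma mcP_ex1:
  assumes "CARD('n::finite) \<ge> 2" "\<rho> > 0" "m^2 < \<rho>"
  shows "\<exists>!\<mu>::(real^'n) measure. mcP m \<rho> \<mu>"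
proof -
  have z: "(0::real)^2 < \<rho>" using assms by simp
  obtain \<mu>0 :: "(real^'n) measure" where m0: "mcP 0 \<rho> \<mu>0" using exists_mcP0[OF assms(1,2)] by blast
  have ex: "mcP m \<rho> (distr \<mu>0 borel (tmap \<rho> 0 m))" by (rule mcP_transfer[OF z assms(3) m0])
  have bk: "distr (distr a borel (tmap \<rho> m 0)) borel (tmap \<rho> 0 m) = a" if "mcP m \<rho> a" for a :: "(real^'n) measure"
  proof -
    have S: "sets a = sets borel" using that by (simp add: mcP_def)
    have Tm: "tmap \<rho> m 0 \<in> a \<rightarrow>\<^sub>M borel" using tmap_meas measurable_cong_sets[OF S refl] by blast
    have "distr (distr a borel (tmap \<rho> m 0)) borel (tmap \<rho> 0 m) = distr a borel (tmap \<rho> 0 m \<circ> tmap \<rho> m 0)"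
      using distr_distr[OF tmap_meas Tm] by simp
    also have "tmap \<rho> 0 m \<circ> tmap \<rho> m 0 = (\<lambda>x. x)" unfolding comp_def by (rule ext, rule tmap_inv[OF assms(3) z])
    also have "distr a borel (\<lambda>x. x) = a" using S by (intro distr_id2) simp
    finally show ?thesis .
  qed
  show ?thesis
  proof (rule ex1I[where P="mcP m \<rho>", OF ex])
    fix b :: "(real^'n) measure" assume b: "mcP m \<rho> b"
    have "distr b borel (tmap \<rho> m 0) = distr (distr \<mu>0 borel (tmap \<rho> 0 m)) borel (tmap \<rho> m 0)"
      using mcP0_unique[OF assms(2) mcP_transfer[OF assms(3) z b] mcP_transfer[OF assms(3) z ex]] .
    then show "b = distr \<mu>0 borel (tmap \<rho> 0 m)" using bk[OF b] bk[OF ex] by metis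
  qed
qed

lemma mc_fixed_mcP:
  assumes "CARD('n::finite) \<ge> 2" "\<rho> > 0" "m^2 < \<rho>"
  shows "mcP m \<rho> (mc_fixed m \<rho> :: (real^'n) measure)"
  unfolding mc_fixed_eq using theI'[OF mcP_ex1[OF assms]] .

lemma mc_fixed_transfer:
  assumes "CARD('n::finite) \<ge> 2" "\<rho> > 0" "m^2 < \<rho>" "m'^2 < \<rho>"
  shows "(mc_fixed m' \<rho> :: (real^'n) measure) = distr (mc_fixed m \<rho>) borel (tmap \<rho> m m')"
  unfolding mc_fixed_eq[of m']
  by (rule the1_equality[OF mcP_ex1[OF assms(1,2,4)] mcP_transfer[OF assms(3,4) mc_fixed_mcP[OF assms(1-3)]]])


lemma half_mix_sets[simp]: "sets (half_mix a b) = sets a"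
  unfolding half_mix_def by (simp add: sets_measure_of sets.space_closed sets.sigma_sets_eq)

lemma half_mix_space[simp]: "space (half_mix a b) = space a"
  unfolding half_mix_def by (simp add: space_measure_of_conv)

lemma half_mix_emeasure:
  assumes "sets b = sets a" "A \<in> sets a"
  shows "emeasure (half_mix a b) A = 1/2 * emeasure a A + 1/2 * emeasure b A"
  unfolding half_mix_def
proof (rule emeasure_measure_of_sigma)
  show "sigma_algebra (space a) (sets a)" by (rule sets.sigma_algebra_axioms)
  show "positive (sets a) (\<lambda>A. 1/2 * emeasure a A + 1/2 * emeasure b A)" by (simp add: positive_def)
  show "countably_additive (sets a) (\<lambda>A. 1/2 * emeasure a A + 1/2 * emeasure b A)"
    unfolding countably_additive_def
  proof (intro allI impI)
    fix F :: "nat \<Rightarrow> _" assume F: "range F \<subseteq> sets a" "disjoint_family F"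
    have Fb: "range F \<subseteq> sets b" using F assms(1) by simp
    have "(\<Sum>i. 1/2 * emeasure a (F i) + 1/2 * emeasure b (F i))
        = (\<Sum>i. 1/2 * emeasure a (F i)) + (\<Sum>i. 1/2 * emeasure b (F i))"
      by (rule suminf_add[symmetric]) auto
    also have "\<dots> = 1/2 * (\<Sum>i. emeasure a (F i)) + 1/2 * (\<Sum>i. emeasure b (F i))"
      by (simp add: ennreal_suminf_cmult)
    also have "\<dots> = 1/2 * emeasure a (\<Union>(range F)) + 1/2 * emeasure b (\<Union>(range F))"
      using suminf_emeasure[OF F] suminf_emeasure[OF Fb F(2)] by simp
    finally show "(\<Sum>i. 1/2 * emeasure a (F i) + 1/2 * emeasure b (F i)) = 1/2 * emeasure a (\<Union>(range F)) + 1/2 * emeasure b (\<Union>(range F))" .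
  qed
  show "A \<in> sets a" by fact
qed

lemma half_ennreal: "1/2 * x + 1/2 * x = (x::ennreal)"
proof -
  have "1/2 * x + 1/2 * x = (1/2 + 1/2) * x" by (simp add: distrib_right)
  also have "(1/2 + 1/2 :: ennreal) = 1"
    by (metis ennreal_divide_numeral ennreal_numeral ennreal_plus field_sum_of_halves ennreal_1 zero_le_divide_iff zero_le_one zero_le_numeral)
  finally show ?thesis by simp
qed

lemma half_mix_self: "half_mix a a = a"
  by (rule measure_eqI) (simp_all add: half_mix_emeasure half_ennreal)

lemma half_mix_prob:
  assumes "prob_space a" "prob_space b" "sets b = sets a"
  shows "prob_space (half_mix a b)"
proof (rule prob_spaceI)
  have sb: "space b = space a" using assms(3) sets_eq_imp_space_eq by blast
  have "emeasure (half_mix a b) (space (half_mix a b)) = 1/2 * emeasure a (space a) + 1/2 * emeasure b (space b)"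
    using assms(3) sb by (simp add: half_mix_emeasure)
  also have "\<dots> = 1/2 * 1 + 1/2 * 1"
    using prob_space.emeasure_space_1[OF assms(1)] prob_space.emeasure_space_1[OF assms(2)] by simp
  also have "\<dots> = 1" by (rule half_ennreal)
  finally show "emeasure (half_mix a b) (space (half_mix a b)) = 1" .
qed


definition cost :: "(real^'n) \<times> (real^'n) \<Rightarrow> real" where
  "cost p = (1 / real CARD('n)) * (\<Sum>i\<in>UNIV. \<bar>fst p $ i - snd p $ i\<bar>^2)"

lemma cost_inner: "cost (x, y) = (1 / real CARD('n)) * ((x - y) \<bullet> (x - y :: real^'n))"
  by (simp add: cost_def inner_vec_def power2_eq_square)

lemma cost_tmap:
  assumes a: "a^2 < \<rho>" and a': "a'^2 < \<rho>" and x: "x \<in> mc_surface a \<rho>"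
  shows "cost (x, tmap \<rho> a a' x :: real^'n) = (a - a')^2 + (sqrt (\<rho> - a^2) - sqrt (\<rho> - a'^2))^2"
proof -
  let ?N = "real CARD('n)"
  define r where "r = sqrt (\<rho> - a^2)"
  define r' where "r' = sqrt (\<rho> - a'^2)"
  define v where "v = x - a *\<^sub>R onevec"
  define k where "k = sqrt ((\<rho> - a'^2)/(\<rho> - a^2))"
  have rr: "r^2 = \<rho> - a^2" using a by (simp add: r_def)
  have kr: "k * r = r'"
  proof -
    have "k * r = sqrt ((\<rho> - a'^2)/(\<rho> - a^2) * (\<rho> - a^2))" unfolding k_def r_def by (rule real_sqrt_mult[symmetric])
    also have "(\<rho> - a'^2)/(\<rho> - a^2) * (\<rho> - a^2) = \<rho> - a'^2" using a by simp
    finally show ?thesis by (simp add: r'_def)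
  qed
  have x1: "x \<bullet> onevec = a * ?N" and xx: "x \<bullet> x = \<rho> * ?N" using x by (auto simp: mc_surface_alt)
  have v1: "v \<bullet> onevec = 0" using x1 by (simp add: v_def inner_diff_left onevec_inner_self)
  have v1': "onevec \<bullet> v = 0" using v1 by (simp add: inner_commute)
  have vv: "v \<bullet> v = (\<rho> - a^2) * ?N" using x1 xx
    by (simp add: v_def inner_diff_left inner_diff_right onevec_inner_self inner_commute power2_eq_square algebra_simps)
  have d: "x - tmap \<rho> a a' x = (a - a') *\<^sub>R onevec + (1 - k) *\<^sub>R v"
    by (simp add: tmap_def v_def k_def algebra_simps)
  have "(x - tmap \<rho> a a' x) \<bullet> (x - tmap \<rho> a a' x) = (a - a')^2 * ?N + (1 - k)^2 * (v \<bullet> v)"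
    unfolding d by (simp add: inner_add_left inner_add_right v1 v1' onevec_inner_self power2_eq_square algebra_simps)
  also have "(1 - k)^2 * (v \<bullet> v) = (r - r')^2 * ?N"
  proof -
    have "(1 - k)^2 * (v \<bullet> v) = ((1 - k) * r)^2 * ?N" by (simp add: vv rr power_mult_distrib)
    also have "(1 - k) * r = r - r'" using kr by (simp add: algebra_simps)
    finally show ?thesis .
  qed
  finally have "(x - tmap \<rho> a a' x) \<bullet> (x - tmap \<rho> a a' x) = ((a - a')^2 + (r - r')^2) * ?N"
    by (simp add: algebra_simps)
  then show ?thesis by (simp add: cost_inner r_def r'_def)
qed

lemma cost_cont: "continuous_on UNIV (cost :: (real^'n) \<times> (real^'n) \<Rightarrow> real)"
  unfolding cost_def by (intro continuous_intros continuous_on_fst continuous_on_snd continuous_on_id)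

lemma w2_bound:
  assumes N: "CARD('n::finite) \<ge> 2" and r: "\<rho> > 0" and a: "a^2 < \<rho>" and a': "a'^2 < \<rho>"
  shows "w2 (half_mix (mc_fixed a \<rho>) (mc_fixed (-a) \<rho>) :: (real^'n) measure) (half_mix (mc_fixed a' \<rho>) (mc_fixed (-a') \<rho>))
         \<le> sqrt ((a - a')^2 + (sqrt (\<rho> - a^2) - sqrt (\<rho> - a'^2))^2)"
proof -
  define C where "C = (a - a')^2 + (sqrt (\<rho> - a^2) - sqrt (\<rho> - a'^2))^2"
  have C0: "C \<ge> 0" by (simp add: C_def)
  have na: "(-a)^2 < \<rho>" and na': "(-a')^2 < \<rho>" using a a' by simp_all
  define A1 where "A1 = (mc_fixed a \<rho> :: (real^'n) measure)"
  define A2 where "A2 = (mc_fixed (-a) \<rho> :: (real^'n) measure)"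
  define T1 where "T1 = (tmap \<rho> a a' :: real^'n \<Rightarrow> real^'n)"
  define T2 where "T2 = (tmap \<rho> (-a) (-a') :: real^'n \<Rightarrow> real^'n)"
  have m1: "mcP a \<rho> A1" unfolding A1_def by (rule mc_fixed_mcP[OF N r a])
  have m2: "mcP (-a) \<rho> A2" unfolding A2_def by (rule mc_fixed_mcP[OF N r na])
  have B1: "mc_fixed a' \<rho> = distr A1 borel T1"
    unfolding A1_def T1_def by (rule mc_fixed_transfer[OF N r a a'])
  have B2: "mc_fixed (-a') \<rho> = distr A2 borel T2"
    unfolding A2_def T2_def by (rule mc_fixed_transfer[OF N r na na'])
  have S1: "sets A1 = sets borel" and P1: "prob_space A1" using m1 by (auto simp: mcP_def)
  have S2: "sets A2 = sets borel" and P2: "prob_space A2" using m2 by (auto simp: mcP_def)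
  have sp1: "space A1 = UNIV" using S1 sets_eq_imp_space_eq by fastforce
  have sp2: "space A2 = UNIV" using S2 sets_eq_imp_space_eq by fastforce
  define f1 where "f1 x = (x, T1 x)" for x
  define f2 where "f2 x = (x, T2 x)" for x
  have f1m: "f1 \<in> borel \<rightarrow>\<^sub>M (borel :: ((real^'n) \<times> (real^'n)) measure)"
    unfolding f1_def T1_def using measurable_Pair[OF measurable_ident_sets[OF refl] tmap_meas] by (simp add: borel_prod)
  have f2m: "f2 \<in> borel \<rightarrow>\<^sub>M (borel :: ((real^'n) \<times> (real^'n)) measure)"
    unfolding f2_def T2_def using measurable_Pair[OF measurable_ident_sets[OF refl] tmap_meas] by (simp add: borel_prod)
  have f1m': "f1 \<in> A1 \<rightarrow>\<^sub>M borel" using f1m measurable_cong_sets[OF S1 refl] by blast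
  have f2m': "f2 \<in> A2 \<rightarrow>\<^sub>M borel" using f2m measurable_cong_sets[OF S2 refl] by blast
  have T1m': "T1 \<in> A1 \<rightarrow>\<^sub>M borel" unfolding T1_def using tmap_meas measurable_cong_sets[OF S1 refl] by blast
  have T2m': "T2 \<in> A2 \<rightarrow>\<^sub>M borel" unfolding T2_def using tmap_meas measurable_cong_sets[OF S2 refl] by blast
  define \<gamma> where "\<gamma> = half_mix (distr A1 borel f1) (distr A2 borel f2)"
  have S\<gamma>: "sets \<gamma> = sets borel" by (simp add: \<gamma>_def)
  have sp\<gamma>: "space \<gamma> = UNIV" by (simp add: \<gamma>_def)
  have P\<gamma>: "prob_space \<gamma>" unfolding \<gamma>_def
    by (rule half_mix_prob) (use P1 P2 f1m' f2m' in \<open>simp_all add: prob_space.prob_space_distr\<close>)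
  have em\<gamma>: "emeasure \<gamma> X = 1/2 * emeasure A1 (f1 -` X) + 1/2 * emeasure A2 (f2 -` X)" if X: "X \<in> sets borel" for X
  proof -
    have "emeasure \<gamma> X = 1/2 * emeasure (distr A1 borel f1) X + 1/2 * emeasure (distr A2 borel f2) X"
      unfolding \<gamma>_def using X by (intro half_mix_emeasure) simp_all
    also have "emeasure (distr A1 borel f1) X = emeasure A1 (f1 -` X)"
      using X by (subst emeasure_distr[OF f1m']) (simp_all add: sp1)
    also have "emeasure (distr A2 borel f2) X = emeasure A2 (f2 -` X)"
      using X by (subst emeasure_distr[OF f2m']) (simp_all add: sp2)
    finally show ?thesis .
  qed
  have fstm: "fst \<in> \<gamma> \<rightarrow>\<^sub>M (borel :: (real^'n) measure)"
    unfolding measurable_cong_sets[OF S\<gamma> refl]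
    by (intro borel_measurable_continuous_onI continuous_on_fst continuous_on_id)
  have sndm: "snd \<in> \<gamma> \<rightarrow>\<^sub>M (borel :: (real^'n) measure)"
    unfolding measurable_cong_sets[OF S\<gamma> refl]
    by (intro borel_measurable_continuous_onI continuous_on_snd continuous_on_id)
  have marg1: "distr \<gamma> borel fst = half_mix A1 A2"
  proof (rule measure_eqI)
    show "sets (distr \<gamma> borel fst) = sets (half_mix A1 A2)" by (simp add: S1)
    fix X assume "X \<in> sets (distr \<gamma> borel fst)"
    then have X: "X \<in> sets borel" by simp
    have fX: "fst -` X \<in> sets (borel :: ((real^'n) \<times> (real^'n)) measure)" using measurable_sets[OF fstm X] by (simp add: S\<gamma> sp\<gamma>)
    have "emeasure (distr \<gamma> borel fst) X = emeasure \<gamma> (fst -` X)"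
      using X by (subst emeasure_distr[OF fstm]) (simp_all add: sp\<gamma>)
    also have "\<dots> = 1/2 * emeasure A1 X + 1/2 * emeasure A2 X"
      using em\<gamma>[OF fX] by (simp add: f1_def f2_def vimage_def)
    also have "\<dots> = emeasure (half_mix A1 A2) X"
      using X S1 S2 by (simp add: half_mix_emeasure)
    finally show "emeasure (distr \<gamma> borel fst) X = emeasure (half_mix A1 A2) X" .
  qed
  have marg2: "distr \<gamma> borel snd = half_mix (distr A1 borel T1) (distr A2 borel T2)"
  proof (rule measure_eqI)
    show "sets (distr \<gamma> borel snd) = sets (half_mix (distr A1 borel T1) (distr A2 borel T2))" by simp
    fix X assume "X \<in> sets (distr \<gamma> borel snd)"
    then have X: "X \<in> sets borel" by simp
    have sX: "snd -` X \<in> sets (borel :: ((real^'n) \<times> (real^'n)) measure)" using measurable_sets[OF sndm X] by (simp add: S\<gamma> sp\<gamma>)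
    have "emeasure (distr \<gamma> borel snd) X = emeasure \<gamma> (snd -` X)"
      using X by (subst emeasure_distr[OF sndm]) (simp_all add: sp\<gamma>)
    also have "\<dots> = 1/2 * emeasure A1 (T1 -` X) + 1/2 * emeasure A2 (T2 -` X)"
      using em\<gamma>[OF sX] by (simp add: f1_def f2_def vimage_def)
    also have "emeasure A1 (T1 -` X) = emeasure (distr A1 borel T1) X"
      using X by (subst emeasure_distr[OF T1m']) (simp_all add: sp1)
    also have "emeasure A2 (T2 -` X) = emeasure (distr A2 borel T2) X"
      using X by (subst emeasure_distr[OF T2m']) (simp_all add: sp2)
    also have "1/2 * emeasure (distr A1 borel T1) X + 1/2 * emeasure (distr A2 borel T2) X
        = emeasure (half_mix (distr A1 borel T1) (distr A2 borel T2)) X"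
      using X by (simp add: half_mix_emeasure)
    finally show "emeasure (distr \<gamma> borel snd) X = emeasure (half_mix (distr A1 borel T1) (distr A2 borel T2)) X" .
  qed
  have coup: "\<gamma> \<in> couplings (half_mix A1 A2) (half_mix (mc_fixed a' \<rho>) (mc_fixed (-a') \<rho>))"
    unfolding couplings_def using P\<gamma> S\<gamma> marg1 marg2 B1 B2 by simp
  define Nset :: "((real^'n) \<times> (real^'n)) set" where "Nset = cost -` {C<..}"
  have Nb: "Nset \<in> sets (borel :: ((real^'n) \<times> (real^'n)) measure)"
    unfolding Nset_def by (rule measurable_sets_borel[OF borel_measurable_continuous_onI[OF cost_cont]]) simp
  have Nb1: "f1 -` Nset \<in> sets A1" using measurable_sets[OF f1m' Nb] by (simp add: sp1)
  have Nb2: "f2 -` Nset \<in> sets A2" using measurable_sets[OF f2m' Nb] by (simp add: sp2)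
  have null1: "emeasure A1 (f1 -` Nset) = 0"
  proof -
    have "AE x in A1. x \<in> mc_surface a \<rho>" by (rule AE_surface[OF m1])
    then have "AE x in A1. f1 x \<notin> Nset"
      by eventually_elim (simp add: f1_def T1_def Nset_def cost_tmap[OF a a'] C_def)
    then show ?thesis using AE_iff_measurable[OF Nb1, of "\<lambda>x. f1 x \<notin> Nset"] by (simp add: sp1 vimage_def)
  qed
  have null2: "emeasure A2 (f2 -` Nset) = 0"
  proof -
    have "AE x in A2. x \<in> mc_surface (-a) \<rho>" by (rule AE_surface[OF m2])
    then have "AE x in A2. f2 x \<notin> Nset"
      by eventually_elim (simp add: f2_def T2_def Nset_def cost_tmap[OF na na'] C_def power2_commute)
    then show ?thesis using AE_iff_measurable[OF Nb2, of "\<lambda>x. f2 x \<notin> Nset"] by (simp add: sp2 vimage_def)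
  qed
  have "emeasure \<gamma> Nset = 0" using em\<gamma>[OF Nb] null1 null2 by simp
  then have "Nset \<in> null_sets \<gamma>" using Nb S\<gamma> by auto
  then have AE\<gamma>: "AE p in \<gamma>. cost p \<le> C"
    by (rule AE_I') (auto simp: Nset_def)
  have "(\<integral>\<^sup>+ p. ennreal (cost p) \<partial>\<gamma>) \<le> (\<integral>\<^sup>+ p. ennreal C \<partial>\<gamma>)"
    using AE\<gamma> by (intro nn_integral_mono_AE) (auto intro: ennreal_leI)
  also have "\<dots> = ennreal C" using prob_space.emeasure_space_1[OF P\<gamma>] by simp
  finally have int: "(\<integral>\<^sup>+ p. ennreal (cost p) \<partial>\<gamma>) \<le> ennreal C" .
  let ?I = "INF \<gamma>\<in>couplings (half_mix A1 A2) (half_mix (mc_fixed a' \<rho>) (mc_fixed (-a') \<rho>)). \<integral>\<^sup>+ p. ennreal (cost p) \<partial>\<gamma>"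
  have "?I \<le> ennreal C" using coup int by (rule INF_lower2)
  then have "enn2real ?I \<le> enn2real (ennreal C)" by (rule enn2real_mono) simp
  then have "enn2real ?I \<le> C" using C0 by simp
  then have "sqrt (enn2real ?I) \<le> sqrt C" by simp
  then show ?thesis unfolding w2_def cost_def[abs_def] A1_def A2_def C_def by simp
qed


lemma ineq1:
  fixes m m' \<rho> :: real
  assumes m: "0 < m" and m': "0 \<le> m'" and a: "m^2 < \<rho>" and a': "m'^2 < \<rho>"
  shows "sqrt ((m - m')^2 + (sqrt (\<rho> - m^2) - sqrt (\<rho> - m'^2))^2) \<le> \<bar>m^2 - m'^2\<bar> / (m * sqrt (1 - m^2/\<rho>))"
proof -
  have rho: "\<rho> > 0" using m a by (smt (verit) zero_less_power)
  define r where "r = sqrt (\<rho> - m^2)"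
  define r' where "r' = sqrt (\<rho> - m'^2)"
  define d where "d = m^2 - m'^2"
  have r: "r > 0" using a by (simp add: r_def)
  have r': "r' \<ge> 0" using a' by (simp add: r'_def less_imp_le)
  have rr: "r^2 = \<rho> - m^2" using a by (simp add: r_def)
  have rr': "r'^2 = \<rho> - m'^2" using a' by (simp add: r'_def less_imp_le)
  have h1: "m - m' = d / (m + m')"
  proof -
    have "(m - m') * (m + m') = d" by (simp add: d_def power2_eq_square algebra_simps)
    then show ?thesis using m m' by (simp add: field_simps)
  qed
  have h2: "r - r' = - d / (r + r')"
  proof -
    have "(r - r') * (r + r') = - d" by (simp add: d_def rr rr' power2_eq_square[symmetric] algebra_simps)
    then show ?thesis using r r' by (simp add: field_simps)
  qed
  have C: "(m - m')^2 + (r - r')^2 = d^2 / (m + m')^2 + d^2 / (r + r')^2"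
    by (simp add: h1 h2 power_divide)
  have l1: "d^2 / (m + m')^2 \<le> d^2 / m^2"
    using m m' by (intro divide_left_mono) (auto intro: power_mono)
  have l2: "d^2 / (r + r')^2 \<le> d^2 / r^2"
    using r r' by (intro divide_left_mono) (auto intro: power_mono)
  have l3: "d^2 / m^2 + d^2 / r^2 = d^2 * \<rho> / (m^2 * r^2)"
  proof -
    have "\<rho> = m^2 + r^2" using rr by simp
    then show ?thesis using m r by (simp add: field_simps)
  qed
  define R where "R = \<bar>d\<bar> / (m * sqrt (1 - m^2/\<rho>))"
  have s: "sqrt (1 - m^2/\<rho>) = r / sqrt \<rho>"
  proof -
    have "1 - m^2/\<rho> = r^2 / \<rho>" using rho rr by (simp add: field_simps)
    then show ?thesis using r by (simp add: real_sqrt_divide)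
  qed
  have R0: "R \<ge> 0" using m r rho by (simp add: R_def s)
  have R': "R = \<bar>d\<bar> * sqrt \<rho> / (m * r)"
    unfolding R_def s using m r rho by (simp add: field_simps)
  have RR: "R^2 = d^2 * \<rho> / (m^2 * r^2)"
    using rho by (simp add: R' power_divide power_mult_distrib)
  have "(m - m')^2 + (r - r')^2 \<le> R^2" using C l1 l2 l3 RR by linarith
  then have "sqrt ((m - m')^2 + (r - r')^2) \<le> sqrt (R^2)" by (rule real_sqrt_le_mono)
  also have "\<dots> = R" using R0 by simp
  finally show ?thesis by (simp add: R_def r_def r'_def d_def)
qed

lemma ineq0:
  fixes m' \<rho> :: real
  assumes m': "0 \<le> m'" and a': "m'^2 < \<rho>"
  shows "sqrt ((0 - m')^2 + (sqrt (\<rho> - 0^2) - sqrt (\<rho> - m'^2))^2) \<le> sqrt 2 * m'"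
proof -
  have rho: "\<rho> > 0" using a' by (smt (verit) zero_le_power2)
  define s where "s = sqrt \<rho>"
  define r' where "r' = sqrt (\<rho> - m'^2)"
  have ss: "s^2 = \<rho>" using rho by (simp add: s_def)
  have rr': "r'^2 = \<rho> - m'^2" using a' by (simp add: r'_def less_imp_le)
  have r': "r' \<ge> 0" using a' by (simp add: r'_def less_imp_le)
  have rs: "r' \<le> s" unfolding r'_def s_def using m' by (intro real_sqrt_le_mono) simp
  have "(s - r')^2 \<le> (s - r') * (s + r')"
    using rs r' by (simp add: power2_eq_square mult_left_mono)
  also have "\<dots> = m'^2" by (simp add: algebra_simps power2_eq_square[symmetric] ss rr')
  finally have "(0 - m')^2 + (s - r')^2 \<le> 2 * m'^2" by simp
  then have "sqrt ((0 - m')^2 + (s - r')^2) \<le> sqrt (2 * m'^2)" by (rule real_sqrt_le_mono)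
  also have "\<dots> = sqrt 2 * m'" using m' by (simp add: real_sqrt_mult)
  finally show ?thesis by (simp add: s_def r'_def)
qed


lemma energy_eq: "mc_energy J e \<rho> = half_mix (mc_fixed (sqrt (-2*e/J)) \<rho>) (mc_fixed (- sqrt (-2*e/J)) \<rho>)"
  by (cases "e = 0") (simp_all add: mc_energy_def half_mix_self)

theorem theorem4p11:
  fixes J \<rho> \<epsilon> \<epsilon>' :: real
  assumes "CARD('n::finite) \<ge> 2"
    and "J > 0" and "\<rho> > 0"
    and "- (\<rho> * J / 2) < \<epsilon>" and "\<epsilon> \<le> 0"
    and "- (\<rho> * J / 2) < \<epsilon>'" and "\<epsilon>' \<le> 0"
  shows "(\<epsilon> \<noteq> 0 \<longrightarrow>
           w2 (mc_energy J \<epsilon> \<rho> :: (real ^ 'n) measure) (mc_energy J \<epsilon>' \<rho>)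
             \<le> (2 / J) * (1 / (sqrt (- (2 * \<epsilon>) / J) * sqrt (1 - (- (2 * \<epsilon>) / (J * \<rho>)))))
                 * \<bar>\<epsilon> - \<epsilon>'\<bar>)
       \<and> (\<epsilon> = 0 \<longrightarrow>
           w2 (mc_energy J 0 \<rho> :: (real ^ 'n) measure) (mc_energy J \<epsilon>' \<rho>)
             \<le> (2 / sqrt J) * sqrt \<bar>\<epsilon>'\<bar>)"
proof -
  define m where "m = sqrt (-2*\<epsilon>/J)"
  define m' where "m' = sqrt (-2*\<epsilon>'/J)"
  have e0: "-2*\<epsilon>/J \<ge> 0" "-2*\<epsilon>'/J \<ge> 0" using assms(2,5,7) by (simp_all add: divide_nonpos_pos)
  have mm: "m^2 = -2*\<epsilon>/J" using e0 by (simp add: m_def)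
  have mm': "m'^2 = -2*\<epsilon>'/J" using e0 by (simp add: m'_def)
  have m0: "m \<ge> 0" "m' \<ge> 0"
    unfolding m_def m'_def by (rule real_sqrt_ge_zero[OF e0(1)], rule real_sqrt_ge_zero[OF e0(2)])
  have mlt: "m^2 < \<rho>"
  proof -
    have "-2*\<epsilon>/J < \<rho>" unfolding pos_divide_less_eq[OF assms(2)] using assms(4) by linarith
    then show ?thesis unfolding mm .
  qed
  have mlt': "m'^2 < \<rho>"
  proof -
    have "-2*\<epsilon>'/J < \<rho>" unfolding pos_divide_less_eq[OF assms(2)] using assms(6) by linarith
    then show ?thesis unfolding mm' .
  qed
  have W: "w2 (mc_energy J \<epsilon> \<rho> :: (real ^ 'n) measure) (mc_energy J \<epsilon>' \<rho>)
      \<le> sqrt ((m - m')^2 + (sqrt (\<rho> - m^2) - sqrt (\<rho> - m'^2))^2)"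
    using w2_bound[OF assms(1,3) mlt mlt'] by (simp add: energy_eq m_def m'_def)
  have eps: "\<epsilon> = - (J/2) * m^2" "\<epsilon>' = - (J/2) * m'^2" using assms(2) by (simp_all add: mm mm')
  show ?thesis
  proof (intro conjI impI)
    assume ne: "\<epsilon> \<noteq> 0"
    have mpos: "m > 0" using ne m0 eps by (cases "m = 0") auto
    have s1: "sqrt (- (2 * \<epsilon>) / J) = m" by (simp add: m_def)
    have s2: "- (2 * \<epsilon>) / (J * \<rho>) = m^2 / \<rho>" using assms(2) by (simp add: mm field_simps)
    have s3: "\<bar>\<epsilon> - \<epsilon>'\<bar> = (J/2) * \<bar>m^2 - m'^2\<bar>"
    proof -
      have "\<epsilon> - \<epsilon>' = - (J/2) * (m^2 - m'^2)" using eps by (simp add: algebra_simps)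
      then show ?thesis using assms(2) by (simp add: abs_mult)
    qed
    have "(2 / J) * (1 / (sqrt (- (2 * \<epsilon>) / J) * sqrt (1 - (- (2 * \<epsilon>) / (J * \<rho>))))) * \<bar>\<epsilon> - \<epsilon>'\<bar>
        = \<bar>m^2 - m'^2\<bar> / (m * sqrt (1 - m^2/\<rho>))"
      unfolding s1 s2 s3 using assms(2) by (simp add: field_simps)
    then show "w2 (mc_energy J \<epsilon> \<rho> :: (real ^ 'n) measure) (mc_energy J \<epsilon>' \<rho>)
             \<le> (2 / J) * (1 / (sqrt (- (2 * \<epsilon>) / J) * sqrt (1 - (- (2 * \<epsilon>) / (J * \<rho>)))))
                 * \<bar>\<epsilon> - \<epsilon>'\<bar>"
      using W ineq1[OF mpos m0(2) mlt mlt'] by simp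
  next
    assume z: "\<epsilon> = 0"
    then have m00: "m = 0" by (simp add: m_def)
    have "sqrt 2 * m' = (2 / sqrt J) * sqrt \<bar>\<epsilon>'\<bar>"
    proof -
      have ab: "\<bar>\<epsilon>'\<bar> = J * m'^2 / 2" using eps assms(2) by (simp add: abs_mult)
      have "sqrt 2 * m' = sqrt (2 * m'^2)" using m0 by (simp add: real_sqrt_mult)
      also have "2 * m'^2 = 4 * \<bar>\<epsilon>'\<bar> / J" using ab assms(2) by (simp add: field_simps)
      also have "sqrt (4 * \<bar>\<epsilon>'\<bar> / J) = 2 * sqrt \<bar>\<epsilon>'\<bar> / sqrt J"
        by (simp add: real_sqrt_divide real_sqrt_mult)
      finally show ?thesis by simp
    qed
    then show "w2 (mc_energy J 0 \<rho> :: (real ^ 'n) measure) (mc_energy J \<epsilon>' \<rho>) \<le> (2 / sqrt J) * sqrt \<bar>\<epsilon>'\<bar>"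
      using W ineq0[OF m0(2) mlt'] z m00 by simp
  qed
qed


end
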